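(* Let $g_1,\dots,g_k$ be fully supported elements of $\mathrm{Diff}^2_+(S^1)$, each of which has a fixed point, and let $G$ be the group they generate. If the commutativity graph of $\{g_1,\dots,g_k\}$ is connected, then $G$ is abelian.
   Context: $\mathrm{Diff}^2_+(S^1)$ is the group of orientation-preserving $C^2$ diffeomorphisms of $S^1$. A homeomorphism $f$ is fully supported if the interior of its fixed point set is empty. The commutativity graph of a set $S$ of group elements has one vertex for each $s\in S$ and an edge joining two elements exactly when they commute. *)

theory Defs
  imports "HOL-Analysis.Analysis" "HOL-Algebra.Bij" "HOL-Algebra.Generated_Groups"
begin

definition S1 :: "complex set" where
  "S1 = sphere 0 1"

definition diff2_plus :: "(complex \<Rightarrow> complex) \<Rightarrow> bool" where
  "diff2_plus f \<longleftrightarrow>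
     (\<exists>F F' F'' :: real \<Rightarrow> real.
        (\<forall>t. f (cis (2 * pi * t)) = cis (2 * pi * F t)) \<and>
        (\<forall>t. F (t + 1) = F t + 1) \<and>
        (\<forall>t. (F has_real_derivative F' t) (at t)) \<and>
        (\<forall>t. (F' has_real_derivative F'' t) (at t)) \<and>
        continuous_on UNIV F'' \<and>
        (\<forall>t. F' t > 0))"

definition fix_set :: "(complex \<Rightarrow> complex) \<Rightarrow> complex set" where
  "fix_set f = {z \<in> S1. f z = z}"

definition fully_supported :: "(complex \<Rightarrow> complex) \<Rightarrow> bool" where
  "fully_supported f \<longleftrightarrow> (top_of_set S1) interior_of (fix_set f) = {}"

definition commute_on_S1 :: "(complex \<Rightarrow> complex) \<Rightarrow> (complex \<Rightarrow> complex) \<Rightarrow> bool" where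
  "commute_on_S1 f g \<longleftrightarrow> (\<forall>z \<in> S1. f (g z) = g (f z))"

definition comm_graph_connected :: "(complex \<Rightarrow> complex) set \<Rightarrow> bool" where
  "comm_graph_connected S \<longleftrightarrow>
     (\<forall>a \<in> S. \<forall>b \<in> S.
        (a, b) \<in> ({(x, y). x \<in> S \<and> y \<in> S \<and> commute_on_S1 x y})\<^sup>*)"

end

theory Submission
  imports Defs
begin

lemma (in group) inv_commute_aux:
  assumes "k \<in> carrier G" "h \<in> carrier G" "k \<otimes> h = h \<otimes> k"
  shows "inv k \<otimes> h = h \<otimes> inv k"
proof -
  have c: "inv k \<in> carrier G" using assms by simp
  have "inv k \<otimes> h = inv k \<otimes> h \<otimes> (k \<otimes> inv k)" using assms c by simp
  also have "\<dots> = inv k \<otimes> (h \<otimes> k) \<otimes> inv k" using assms c by (simp add: m_assoc)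
  also have "\<dots> = inv k \<otimes> (k \<otimes> h) \<otimes> inv k" using assms by simp
  also have "\<dots> = (inv k \<otimes> k) \<otimes> h \<otimes> inv k" using assms c by (simp only: m_assoc m_closed)
  also have "\<dots> = h \<otimes> inv k" using assms by simp
  finally show ?thesis .
qed

lemma (in group) generate_commuting:
  assumes H: "H \<subseteq> carrier G"
    and comm: "\<And>x y. x \<in> H \<Longrightarrow> y \<in> H \<Longrightarrow> x \<otimes> y = y \<otimes> x"
  shows "\<forall>a \<in> generate G H. \<forall>b \<in> generate G H. a \<otimes> b = b \<otimes> a"
proof -
  have gc: "generate G H \<subseteq> carrier G" using generate_in_carrier[OF H] by blast
  have step1: "h \<otimes> x = x \<otimes> h" if h: "h \<in> H" and x: "x \<in> generate G H" for h x
    using x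
  proof induction
    case one then show ?case using h H by auto
  next
    case (incl k) then show ?case using comm h by auto
  next
    case (inv k)
    then have "k \<otimes> h = h \<otimes> k" using comm h by auto
    then show ?case using H h inv
      using inv_commute_aux[of k h] by (metis subsetD)
  next
    case (eng x1 x2)
    have c1: "x1 \<in> carrier G" "x2 \<in> carrier G" "h \<in> carrier G" using eng gc h H by auto
    have "h \<otimes> (x1 \<otimes> x2) = (h \<otimes> x1) \<otimes> x2" using c1 m_assoc by auto
    also have "\<dots> = x1 \<otimes> (h \<otimes> x2)" using eng c1 m_assoc by auto
    also have "\<dots> = (x1 \<otimes> x2) \<otimes> h" using eng c1 m_assoc by auto
    finally show ?case .
  qed
  show ?thesis
  proof (intro ballI)
    fix a b assume a: "a \<in> generate G H" and b: "b \<in> generate G H"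
    from b show "a \<otimes> b = b \<otimes> a"
    proof induction
      case one then show ?case using a gc by auto
    next
      case (incl k) then show ?case using step1 a by auto
    next
      case (inv k)
      then have "k \<otimes> a = a \<otimes> k" using step1 a by auto
      moreover have "a \<in> carrier G" "k \<in> carrier G" using a gc inv H by auto
      ultimately show ?case
        using inv_commute_aux[of k a] by auto
    next
      case (eng x1 x2)
      have c1: "x1 \<in> carrier G" "x2 \<in> carrier G" "a \<in> carrier G" using eng gc a by auto
      have "a \<otimes> (x1 \<otimes> x2) = (a \<otimes> x1) \<otimes> x2" using c1 m_assoc by auto
      also have "\<dots> = x1 \<otimes> (a \<otimes> x2)" using eng c1 m_assoc by auto
      also have "\<dots> = (x1 \<otimes> x2) \<otimes> a" using eng c1 m_assoc by auto
      finally show ?case .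
    qed
  qed
qed

lemma strict_mono_deriv:
  fixes f f' :: "real \<Rightarrow> real"
  assumes d: "\<And>t. (f has_real_derivative f' t) (at t)" and p: "\<And>t. f' t > 0"
  shows "strict_mono f"
proof (rule strict_monoI)
  fix x y :: real assume "x < y"
  then show "f x < f y" using DERIV_pos_imp_increasing[of x y f] d p by blast
qed

lemma funpow_deriv:
  fixes W W' :: "real \<Rightarrow> real"
  assumes d: "\<And>t. (W has_real_derivative W' t) (at t)"
  shows "((W ^^ m) has_real_derivative (\<Prod>k<m. W' ((W ^^ k) x))) (at x)"
proof (induction m)
  case 0 then show ?case by (simp add: DERIV_ident[unfolded id_def[symmetric]] id_def)
next
  case (Suc m)
  have "(W \<circ> (W ^^ m) has_real_derivative W' ((W ^^ m) x) * (\<Prod>k<m. W' ((W ^^ k) x))) (at x)"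
    by (rule DERIV_chain[OF d Suc])
  then show ?case by (simp add: mult.commute o_def)
qed

lemma funpow_comm1:
  assumes "\<And>t. f (W t) = W (f t)"
  shows "(f ^^ n) (W x) = W ((f ^^ n) x)"
  by (induction n) (auto simp: assms)

lemma funpow_comm:
  assumes "\<And>t. f (W t) = W (f t)"
  shows "(f ^^ n) ((W ^^ m) x) = (W ^^ m) ((f ^^ n) x)"
proof (induction m)
  case 0 then show ?case by simp
next
  case (Suc m)
  then show ?case using funpow_comm1[of f W n, OF assms] by simp
qed

lemma funpow_strict_mono:
  fixes f :: "real \<Rightarrow> real"
  assumes "strict_mono f" shows "strict_mono (f ^^ n)"
proof (induction n)
  case 0 then show ?case by (simp add: strict_mono_def)
next
  case (Suc n) then show ?case using assms by (simp add: strict_mono_def)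
qed

lemma isCont_funpow:
  fixes W :: "real \<Rightarrow> real"
  assumes "\<And>t. isCont W t" shows "isCont (W ^^ n) x"
proof (induction n arbitrary: x)
  case 0 then show ?case by (simp add: funpow_0)
next
  case (Suc n) then show ?case using isCont_o2[OF Suc assms] by (simp add: o_def)
qed

lemma isCont_prod_deriv:
  fixes W W' :: "real \<Rightarrow> real"
  assumes c: "\<And>t. isCont W t" and c': "\<And>t. isCont W' t"
  shows "isCont (\<lambda>x. \<Prod>k<m. W' ((W ^^ k) x)) x"
proof (induction m)
  case 0 then show ?case by simp
next
  case (Suc m)
  have "isCont (\<lambda>x. W' ((W ^^ m) x)) x"
    using isCont_o2[OF isCont_funpow[OF c] c'] by simp
  then show ?case using Suc by (simp add: isCont_mult)
qed

lemma orbit_to_fixed: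
  fixes f :: "real \<Rightarrow> real"
  assumes sm: "strict_mono f" and cf: "\<And>t. isCont f t" and fa: "f a = a"
    and dec: "\<And>x. a < x \<Longrightarrow> x \<le> x0 \<Longrightarrow> f x < x"
    and u: "a < u" "u \<le> x0"
  shows "(\<lambda>n. (f ^^ n) u) \<longlonglongrightarrow> a"
    and "\<And>n. a < (f ^^ n) u \<and> (f ^^ n) u \<le> u"
    and "decseq (\<lambda>n. (f ^^ n) u)"
proof -
  show bnd: "a < (f ^^ n) u \<and> (f ^^ n) u \<le> u" for n
  proof (induction n)
    case 0 then show ?case using u by simp
  next
    case (Suc n)
    have "f a < f ((f ^^ n) u)" using Suc sm by (simp add: strict_mono_def)
    moreover have "f ((f ^^ n) u) < (f ^^ n) u" using Suc u dec by auto
    ultimately show ?case using fa Suc by simp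
  qed
  show ds: "decseq (\<lambda>n. (f ^^ n) u)"
  proof (rule decseq_SucI)
    fix n show "(f ^^ Suc n) u \<le> (f ^^ n) u" using bnd[of n] dec u by (simp add: less_imp_le)
  qed
  obtain L where L: "(\<lambda>n. (f ^^ n) u) \<longlonglongrightarrow> L" "\<forall>i. L \<le> (f ^^ i) u"
  proof -
    have "\<forall>i. a \<le> (f ^^ i) u" using bnd less_imp_le by blast
    then show ?thesis using decseq_convergent[OF ds] that by blast
  qed
  have "(\<lambda>n. f ((f ^^ n) u)) \<longlonglongrightarrow> f L" using L(1) cf isCont_tendsto_compose by blast
  moreover have "(\<lambda>n. f ((f ^^ n) u)) \<longlonglongrightarrow> L"
    using LIMSEQ_Suc[OF L(1)] by simp
  ultimately have fL: "f L = L" using LIMSEQ_unique by blast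
  have "a \<le> L" using L(1) bnd by (meson LIMSEQ_le_const less_imp_le)
  moreover have "L \<le> x0" using L(2)[rule_format, of 0] u by simp
  ultimately have "L = a" using fL dec by force
  then show "(\<lambda>n. (f ^^ n) u) \<longlonglongrightarrow> a" using L by simp
qed

lemma lip_ln_deriv:
  fixes f' f'' :: "real \<Rightarrow> real"
  assumes df': "\<And>t. (f' has_real_derivative f'' t) (at t)"
    and cf'': "continuous_on UNIV f''"
    and fpos: "\<And>t. f' t > 0"
  obtains B where "B \<ge> 0" "\<And>p q. p \<in> {a..b} \<Longrightarrow> q \<in> {a..b} \<Longrightarrow> \<bar>ln (f' p) - ln (f' q)\<bar> \<le> B * \<bar>p - q\<bar>"
proof -
  have cf': "continuous_on UNIV f'"
    using df' by (meson DERIV_isCont continuous_at_imp_continuous_on)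
  have "continuous_on {a..b} (\<lambda>t. f'' t / f' t)"
    using cf' cf'' fpos by (intro continuous_intros) (auto intro: continuous_on_subset simp: less_imp_neq[symmetric])
  then obtain B where B: "B \<ge> 0" "\<And>x. x \<in> {a..b} \<Longrightarrow> norm (f'' x / f' x) \<le> B"
    using continuous_on_compact_bound[OF compact_Icc] by blast
  have dg: "((\<lambda>t. ln (f' t)) has_real_derivative f'' t / f' t) (at t)" for t
    using DERIV_chain'[OF df' DERIV_ln_divide[OF fpos[of t]]] by (simp add: field_simps)
  have main: "\<bar>ln (f' p) - ln (f' q)\<bar> \<le> B * \<bar>p - q\<bar>" if pq: "p \<in> {a..b}" "q \<in> {a..b}" "p < q" for p q
  proof -
    obtain z where z: "p < z" "z < q" "ln (f' q) - ln (f' p) = (q - p) * (f'' z / f' z)"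
      using MVT2[OF \<open>p < q\<close>, of "\<lambda>t. ln (f' t)" "\<lambda>t. f'' t / f' t"] dg by blast
    have "z \<in> {a..b}" using z pq by auto
    then have "\<bar>f'' z / f' z\<bar> \<le> B" using B by auto
    moreover have "\<bar>(q - p) * (f'' z / f' z)\<bar> = (q - p) * \<bar>f'' z / f' z\<bar>"
      using pq by (simp add: abs_mult)
    ultimately have le: "\<bar>(q - p) * (f'' z / f' z)\<bar> \<le> (q - p) * B"
      using pq by (metis diff_gt_0_iff_gt less_eq_real_def mult_left_mono)
    have "\<bar>ln (f' p) - ln (f' q)\<bar> = \<bar>ln (f' q) - ln (f' p)\<bar>" by (rule abs_minus_commute)
    also have "\<dots> = \<bar>(q - p) * (f'' z / f' z)\<bar>" by (simp only: z(3))
    also have "\<dots> \<le> (q - p) * B" by (rule le)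
    finally show ?thesis using pq by (simp add: mult.commute)
  qed
  show ?thesis
  proof (rule that[OF B(1)])
    fix p q assume "p \<in> {a..b}" "q \<in> {a..b}"
    then show "\<bar>ln (f' p) - ln (f' q)\<bar> \<le> B * \<bar>p - q\<bar>"
      using main[of p q] main[of q p] by (cases p q rule: linorder_cases) (auto simp: abs_minus_commute)
  qed
qed

lemma deriv_at_fixed_seq:
  fixes W :: "real \<Rightarrow> real"
  assumes d: "(W has_real_derivative D) (at a)" and Wa: "W a = a"
    and s: "s \<longlonglongrightarrow> a" and sne: "\<And>n. s n \<noteq> a" and Ws: "\<And>n. W (s n) = s n"
  shows "D = 1"
proof -
  have lim: "((\<lambda>h. (W (a + h) - W a) / h) \<longlongrightarrow> D) (at 0)"
    using d by (simp add: DERIV_def)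
  have "(\<lambda>n. s n - a) \<longlonglongrightarrow> 0" using s by (simp add: LIM_zero)
  then have fl: "filterlim (\<lambda>n. s n - a) (at 0) sequentially"
    using sne by (intro filterlim_atI) auto
  have "(\<lambda>n. (W (a + (s n - a)) - W a) / (s n - a)) \<longlonglongrightarrow> D"
    using filterlim_compose[OF lim fl] by (simp add: o_def)
  moreover have "(\<lambda>n. (W (a + (s n - a)) - W a) / (s n - a)) = (\<lambda>n. 1)"
    using Ws Wa sne by (auto simp: fun_eq_iff)
  ultimately show "D = 1" using LIMSEQ_unique tendsto_const by metis
qed

lemma kopell_core:
  fixes f f' f'' W W' :: "real \<Rightarrow> real"
  assumes df: "\<And>t. (f has_real_derivative f' t) (at t)"
    and df': "\<And>t. (f' has_real_derivative f'' t) (at t)"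
    and cf'': "continuous_on UNIV f''"
    and fpos: "\<And>t. f' t > 0"
    and dW: "\<And>t. (W has_real_derivative W' t) (at t)"
    and cW': "continuous_on UNIV W'"
    and Wpos: "\<And>t. W' t > 0"
    and comm: "\<And>t. f (W t) = W (f t)"
    and ax: "a < x0" and fa: "f a = a"
    and dec: "\<And>x. a < x \<Longrightarrow> x \<le> x0 \<Longrightarrow> f x < x"
    and Wx0: "W x0 = x0"
    and y: "f x0 \<le> y" "y \<le> x0"
  shows "W y = y"
proof -
  have smf: "strict_mono f" using strict_mono_deriv[OF df fpos] .
  have smW: "strict_mono W" using strict_mono_deriv[OF dW Wpos] .
  have cf: "\<And>t. isCont f t" using df by (meson DERIV_isCont)
  have cW: "\<And>t. isCont W t" using dW by (meson DERIV_isCont)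
  have cW'a: "\<And>t. isCont W' t" using cW' by (simp add: continuous_on_eq_continuous_at)
  define s where "s n = (f ^^ n) x0" for n
  have orb1: "(\<lambda>n. (f ^^ n) u) \<longlonglongrightarrow> a" if "a < u" "u \<le> x0" for u
    using orbit_to_fixed(1)[of f a x0 u] smf cf fa dec that by blast
  have orb2: "a < (f ^^ n) u \<and> (f ^^ n) u \<le> u" if "a < u" "u \<le> x0" for u n
    using orbit_to_fixed(2)[of f a x0 u] smf cf fa dec that by blast
  have slim: "s \<longlonglongrightarrow> a" using orb1[OF ax order_refl] unfolding s_def[abs_def] .
  have sbnd: "a < s n \<and> s n \<le> x0" for n using orb2[OF ax order_refl] by (simp add: s_def)
  have sSuc: "s (Suc n) = f (s n)" for n by (simp add: s_def)
  have Wfix: "W (s n) = s n" for n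
    by (induction n) (auto simp: s_def Wx0 comm[symmetric])
  have Wa: "W a = a"
  proof -
    have "(\<lambda>n. W (s n)) \<longlonglongrightarrow> W a" using slim cW isCont_tendsto_compose by blast
    then show ?thesis using Wfix slim LIMSEQ_unique by auto
  qed
  have W'a: "W' a = 1"
    by (rule deriv_at_fixed_seq[OF dW Wa slim _ Wfix]) (use sbnd in force)
  define Dm where "Dm m x = (\<Prod>k<m. W' ((W ^^ k) x))" for m x
  define En where "En n x = (\<Prod>k<n. f' ((f ^^ k) x))" for n x
  have dDm: "((W ^^ m) has_real_derivative Dm m x) (at x)" for m x
    unfolding Dm_def by (rule funpow_deriv[OF dW])
  have dEn: "((f ^^ n) has_real_derivative En n x) (at x)" for n x
    unfolding En_def by (rule funpow_deriv[OF df])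
  have Dmpos: "Dm m x > 0" for m x unfolding Dm_def using Wpos by (simp add: prod_pos)
  have Enpos: "En n x > 0" for n x unfolding En_def using fpos by (simp add: prod_pos)
  have Wka: "(W ^^ k) a = a" for k by (induction k) (auto simp: Wa)
  have Dma: "Dm m a = 1" for m unfolding Dm_def by (simp add: Wka W'a)
  have cDm: "isCont (Dm m) x" for m x
    unfolding Dm_def by (rule isCont_prod_deriv[OF cW cW'a])
  have fcomm: "(f ^^ n) ((W ^^ m) x) = (W ^^ m) ((f ^^ n) x)" for n m x
    by (rule funpow_comm[of f W, OF comm])
  have ident: "Dm m ((f ^^ n) x) * En n x = En n ((W ^^ m) x) * Dm m x" for m n x
  proof -
    have "((W ^^ m) \<circ> (f ^^ n) has_real_derivative Dm m ((f ^^ n) x) * En n x) (at x)"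
      by (rule DERIV_chain[OF dDm dEn])
    moreover have "((f ^^ n) \<circ> (W ^^ m) has_real_derivative En n ((W ^^ m) x) * Dm m x) (at x)"
      by (rule DERIV_chain[OF dEn dDm])
    moreover have "(f ^^ n) \<circ> (W ^^ m) = (W ^^ m) \<circ> (f ^^ n)" using fcomm by (auto simp: fun_eq_iff)
    ultimately show ?thesis using DERIV_unique by metis
  qed
  obtain B where B: "B \<ge> 0" "\<And>p q. p \<in> {a..x0} \<Longrightarrow> q \<in> {a..x0} \<Longrightarrow> \<bar>ln (f' p) - ln (f' q)\<bar> \<le> B * \<bar>p - q\<bar>"
    using lip_ln_deriv[OF df' cf'' fpos] by blast
  define c where "c = exp (- B * (x0 - a))"
  have cpos: "c > 0" by (simp add: c_def)
  have smfk: "strict_mono (f ^^ k)" for k using funpow_strict_mono[OF smf] .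
  have fk_in: "s (Suc k) \<le> (f ^^ k) u \<and> (f ^^ k) u \<le> s k" if u: "s 1 \<le> u" "u \<le> x0" for u k
  proof -
    have "(f ^^ k) (s 1) \<le> (f ^^ k) u" using u smfk[of k] by (simp add: strict_mono_less_eq)
    moreover have "(f ^^ k) u \<le> (f ^^ k) x0" using u smfk[of k] by (simp add: strict_mono_less_eq)
    moreover have "(f ^^ k) (s 1) = s (Suc k)" by (simp add: s_def funpow_swap1)
    ultimately show ?thesis by (simp add: s_def)
  qed
  have dist: "En n u \<ge> c * En n v" if u: "s 1 \<le> u" "u \<le> x0" and v: "s 1 \<le> v" "v \<le> x0" for n u v
  proof -
    have trm: "ln (f' ((f ^^ k) u)) - ln (f' ((f ^^ k) v)) \<ge> - B * (s k - s (Suc k))" for k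
    proof -
      have iu: "(f ^^ k) u \<in> {a..x0}" and iv: "(f ^^ k) v \<in> {a..x0}"
        using fk_in[OF u, of k] fk_in[OF v, of k] sbnd[of k] sbnd[of "Suc k"] by auto
      have "\<bar>(f ^^ k) u - (f ^^ k) v\<bar> \<le> s k - s (Suc k)"
        using fk_in[OF u, of k] fk_in[OF v, of k] by auto
      then have "B * \<bar>(f ^^ k) u - (f ^^ k) v\<bar> \<le> B * (s k - s (Suc k))"
        using B(1) by (rule mult_left_mono)
      then show ?thesis using B(2)[OF iu iv] by linarith
    qed
    have "ln (En n u) - ln (En n v) = (\<Sum>k<n. ln (f' ((f ^^ k) u)) - ln (f' ((f ^^ k) v)))"
      unfolding En_def using fpos by (simp add: ln_prod sum_subtractf less_imp_neq[symmetric])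
    also have "\<dots> \<ge> (\<Sum>k<n. - B * (s k - s (Suc k)))" by (rule sum_mono) (rule trm)
    finally have "ln (En n u) - ln (En n v) \<ge> - B * (\<Sum>k<n. s k - s (Suc k))"
      by (simp add: sum_distrib_left)
    also have "(\<Sum>k<n. s k - s (Suc k)) = s 0 - s n" by (rule sum_lessThan_telescope')
    finally have "ln (En n u) - ln (En n v) \<ge> - B * (s 0 - s n)" .
    moreover have "- B * (s 0 - s n) \<ge> - B * (x0 - a)"
      using B(1) sbnd[of n] by (simp add: s_def mult_left_mono)
    ultimately have "ln (En n u) \<ge> ln (En n v) + (- B * (x0 - a))" by linarith
    then have "exp (ln (En n u)) \<ge> exp (ln (En n v) + (- B * (x0 - a)))" by (simp only: exp_le_cancel_iff)
    moreover have "exp (ln (En n u)) = En n u" using Enpos[of n u] by simp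
    moreover have "exp (ln (En n v) + (- B * (x0 - a))) = c * En n v"
      using Enpos[of n v] by (simp only: exp_add c_def exp_ln mult.commute)
    ultimately show ?thesis by linarith
  qed
  have Wk_in: "s 1 \<le> (W ^^ m) u \<and> (W ^^ m) u \<le> x0" if u: "s 1 \<le> u" "u \<le> x0" for u m
  proof -
    have smWm: "strict_mono (W ^^ m)" using funpow_strict_mono[OF smW] .
    have f1: "(W ^^ m) (s 1) = s 1" by (induction m) (auto simp: Wfix)
    have f0: "(W ^^ m) x0 = x0" by (induction m) (auto simp: Wx0)
    show ?thesis using u smWm f1 f0 by (metis strict_mono_less_eq)
  qed
  have key: "Dm m \<xi> \<ge> c" if xi: "s 1 \<le> \<xi>" "\<xi> \<le> x0" for m \<xi>
  proof -
    have each: "c * Dm m ((f ^^ n) \<xi>) \<le> Dm m \<xi>" for n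
    proof -
      have w: "s 1 \<le> (W ^^ m) \<xi>" "(W ^^ m) \<xi> \<le> x0" using Wk_in[OF xi] by auto
      have "En n ((W ^^ m) \<xi>) * Dm m \<xi> = Dm m ((f ^^ n) \<xi>) * En n \<xi>" using ident by simp
      also have "\<dots> \<ge> Dm m ((f ^^ n) \<xi>) * (c * En n ((W ^^ m) \<xi>))"
        using dist[OF xi w] Dmpos by (simp add: less_imp_le mult_left_mono)
      finally have "En n ((W ^^ m) \<xi>) * (c * Dm m ((f ^^ n) \<xi>)) \<le> En n ((W ^^ m) \<xi>) * Dm m \<xi>"
        by (simp add: algebra_simps)
      then show ?thesis using Enpos by (meson mult_le_cancel_left_pos)
    qed
    have "a < \<xi>" using xi sbnd[of 1] by auto
    then have "(\<lambda>n. (f ^^ n) \<xi>) \<longlonglongrightarrow> a" using orb1[OF _ xi(2)] by blast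
    then have "(\<lambda>n. Dm m ((f ^^ n) \<xi>)) \<longlonglongrightarrow> Dm m a" using cDm isCont_tendsto_compose by blast
    then have "(\<lambda>n. c * Dm m ((f ^^ n) \<xi>)) \<longlonglongrightarrow> c * 1" using Dma by (intro tendsto_mult) auto
    then have "c * 1 \<le> Dm m \<xi>" by (rule LIMSEQ_le_const2) (use each in blast)
    then show ?thesis by simp
  qed
  have yI: "s 1 \<le> y" "y \<le> x0" using y by (auto simp: s_def)
  have Wy: "s 1 \<le> W y" "W y \<le> x0" using Wk_in[OF yI, of 1] by auto
  have step: "\<bar>(W ^^ Suc m) y - (W ^^ m) y\<bar> \<ge> c * \<bar>W y - y\<bar>"
    and sgn: "((W ^^ Suc m) y - (W ^^ m) y) * (W y - y) \<ge> 0" for m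
  proof -
    have eq: "(W ^^ Suc m) y = (W ^^ m) (W y)" by (simp add: funpow_swap1)
    have "\<exists>z. s 1 \<le> z \<and> z \<le> x0 \<and> (W ^^ m) (W y) - (W ^^ m) y = (W y - y) * Dm m z"
    proof (cases "W y" y rule: linorder_cases)
      case less
      obtain z where z: "W y < z" "z < y" "(W ^^ m) y - (W ^^ m) (W y) = (y - W y) * Dm m z"
        using MVT2[OF less, of "W ^^ m" "Dm m"] dDm by blast
      then show ?thesis using Wy yI by (intro exI[of _ z]) (auto simp: algebra_simps)
    next
      case equal then show ?thesis using yI by auto
    next
      case greater
      obtain z where z: "y < z" "z < W y" "(W ^^ m) (W y) - (W ^^ m) y = (W y - y) * Dm m z"
        using MVT2[OF greater, of "W ^^ m" "Dm m"] dDm by blast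
      then show ?thesis using Wy yI by (intro exI[of _ z]) auto
    qed
    then obtain z where z: "s 1 \<le> z" "z \<le> x0" "(W ^^ Suc m) y - (W ^^ m) y = (W y - y) * Dm m z"
      using eq by auto
    have "Dm m z \<ge> c" using key[OF z(1,2)] .
    then show "\<bar>(W ^^ Suc m) y - (W ^^ m) y\<bar> \<ge> c * \<bar>W y - y\<bar>"
      using z(3) Dmpos[of m z] by (simp add: abs_mult mult.commute mult_right_mono)
    show "((W ^^ Suc m) y - (W ^^ m) y) * (W y - y) \<ge> 0"
      using z(3) Dmpos[of m z] by (simp add: mult.commute mult.left_commute)
  qed
  show "W y = y"
  proof (rule ccontr)
    assume ne: "W y \<noteq> y"
    have grow: "\<bar>(W ^^ m) y - y\<bar> \<ge> real m * (c * \<bar>W y - y\<bar>)" for m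
    proof (induction m)
      case 0 then show ?case by simp
    next
      case (Suc m)
      have same: "((W ^^ m) y - y) * (W y - y) \<ge> 0"
      proof (induction m)
        case 0 then show ?case by simp
      next
        case (Suc m)
        have "((W ^^ Suc m) y - y) * (W y - y) = ((W ^^ Suc m) y - (W ^^ m) y) * (W y - y) + ((W ^^ m) y - y) * (W y - y)"
          by (simp add: algebra_simps)
        then show ?case using Suc sgn[of m] by simp
      qed
      have "\<bar>(W ^^ Suc m) y - y\<bar> = \<bar>(W ^^ Suc m) y - (W ^^ m) y\<bar> + \<bar>(W ^^ m) y - y\<bar>"
      proof -
        have s1: "((W ^^ Suc m) y - (W ^^ m) y) * (W y - y) \<ge> 0" by (rule sgn)
        show ?thesis
        proof (cases "W y > y")
          case True
          then have "(W ^^ Suc m) y - (W ^^ m) y \<ge> 0" "(W ^^ m) y - y \<ge> 0"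
            using s1 same by (auto simp: zero_le_mult_iff)
          then show ?thesis by simp
        next
          case False
          then have "W y < y" using ne by auto
          then have "(W ^^ Suc m) y - (W ^^ m) y \<le> 0" "(W ^^ m) y - y \<le> 0"
            using s1 same by (auto simp: zero_le_mult_iff)
          then show ?thesis by simp
        qed
      qed
      then show ?case using Suc step[of m] by (simp add: algebra_simps)
    qed
    have bnd: "\<bar>(W ^^ m) y - y\<bar> \<le> x0 - s 1" for m using Wk_in[OF yI, of m] yI by auto
    have "c * \<bar>W y - y\<bar> > 0" using cpos ne by simp
    then obtain m where "x0 - s 1 < real m * (c * \<bar>W y - y\<bar>)" using ex_less_of_nat_mult by blast
    then show False using grow[of m] bnd[of m] by linarith
  qed
qed

lemma kopell_left:
  fixes f f' f'' W W' :: "real \<Rightarrow> real"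
  assumes df: "\<And>t. (f has_real_derivative f' t) (at t)"
    and df': "\<And>t. (f' has_real_derivative f'' t) (at t)"
    and cf'': "continuous_on UNIV f''"
    and fpos: "\<And>t. f' t > 0"
    and dW: "\<And>t. (W has_real_derivative W' t) (at t)"
    and cW': "continuous_on UNIV W'"
    and Wpos: "\<And>t. W' t > 0"
    and comm: "\<And>t. f (W t) = W (f t)"
    and ab: "a < b" and fa: "f a = a" and fb: "f b = b"
    and dec: "\<And>x. a < x \<Longrightarrow> x < b \<Longrightarrow> f x < x"
    and sf: "surj f"
    and x0: "a < x0" "x0 < b" and Wx0: "W x0 = x0"
    and y: "a < y" "y < b"
  shows "W y = y"
proof -
  have smf: "strict_mono f" using strict_mono_deriv[OF df fpos] .
  have cf: "\<And>t. isCont f t" using df by (meson DERIV_isCont)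
  have part1: "W y = y" if x1: "a < x1" "x1 < b" "W x1 = x1" and yy: "a < y" "y \<le> x1" for x1 y
  proof (cases "y = x1")
    case True then show ?thesis using x1 by simp
  next
    case False
    then have yx1: "y < x1" using yy by simp
    have dec1: "\<And>x. a < x \<Longrightarrow> x \<le> x1 \<Longrightarrow> f x < x" using dec x1 by force
    have lim: "(\<lambda>n. (f ^^ n) x1) \<longlonglongrightarrow> a"
      using orbit_to_fixed(1)[of f a x1 x1] smf cf fa dec1 x1 by blast
    have bnd: "a < (f ^^ n) x1 \<and> (f ^^ n) x1 \<le> x1" for n
      using orbit_to_fixed(2)[of f a x1 x1] smf cf fa dec1 x1 by blast
    have "\<exists>n. (f ^^ n) x1 < y"
    proof -
      have "eventually (\<lambda>n. (f ^^ n) x1 < y) sequentially"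
        using lim yy(1) by (simp add: order_tendstoD(2))
      then show ?thesis by (meson eventually_sequentially order_refl)
    qed
    then have ex: "\<exists>n. (f ^^ n) x1 \<le> y" by (meson less_imp_le)
    define k where "k = (LEAST n. (f ^^ n) x1 \<le> y)"
    have k1: "(f ^^ k) x1 \<le> y" using LeastI_ex[OF ex] by (simp add: k_def)
    have "k \<noteq> 0" using k1 yx1 by (intro notI) simp
    then obtain j where kj: "k = Suc j" using not0_implies_Suc by blast
    have j1: "\<not> (f ^^ j) x1 \<le> y" using not_less_Least[of j "\<lambda>n. (f ^^ n) x1 \<le> y"] kj k_def by simp
    define z where "z = (f ^^ j) x1"
    have Wz: "W z = z" unfolding z_def
      by (induction j) (auto simp: x1 comm[symmetric])
    have z: "a < z" "z \<le> x1" using bnd[of j] by (auto simp: z_def)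
    have "f z \<le> y" using k1 kj by (simp add: z_def)
    moreover have "y \<le> z" using j1 by (simp add: z_def)
    ultimately show ?thesis
      using kopell_core[OF df df' cf'' fpos dW cW' Wpos comm z(1) fa _ Wz] dec z x1 by force
  qed
  show ?thesis
  proof (cases "y \<le> x0")
    case True then show ?thesis using part1[OF x0 Wx0 y(1)] by simp
  next
    case False
    then have yx0: "x0 < y" by simp
    define p where "p n = (inv_into UNIV f ^^ n) x0" for n
    have fp: "f (p (Suc n)) = p n" for n by (simp add: p_def surj_f_inv_f[OF sf])
    have pin: "a < p n \<and> p n < b" for n
    proof (induction n)
      case 0 then show ?case using x0 by (simp add: p_def)
    next
      case (Suc n)
      have "f a < f (p (Suc n))" "f (p (Suc n)) < f b" using fp[of n] Suc fa fb by auto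
      then show ?case using smf by (meson strict_mono_less)
    qed
    have pinc: "p n < p (Suc n)" for n using dec[of "p (Suc n)"] pin[of "Suc n"] fp[of n] by simp
    have Wp: "W (p n) = p n" for n
    proof (induction n)
      case 0 then show ?case using Wx0 by (simp add: p_def)
    next
      case (Suc n)
      have "f (W (p (Suc n))) = f (p (Suc n))" using comm[of "p (Suc n)"] fp[of n] Suc by simp
      then show ?case using smf by (meson strict_mono_eq)
    qed
    have "incseq p" using pinc by (simp add: incseq_SucI less_imp_le)
    then obtain L where L: "p \<longlonglongrightarrow> L" "\<forall>i. p i \<le> L"
    proof -
      have "\<forall>i. p i \<le> b" using pin less_imp_le by blast
      then show ?thesis using incseq_convergent[of p b] \<open>incseq p\<close> that by blast
    qed
    have "(\<lambda>n. f (p (Suc n))) \<longlonglongrightarrow> f L"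
      using LIMSEQ_Suc[OF L(1)] cf isCont_tendsto_compose by blast
    moreover have "(\<lambda>n. f (p (Suc n))) \<longlonglongrightarrow> L" using L(1) fp by simp
    ultimately have fL: "f L = L" using LIMSEQ_unique by blast
    have "L \<le> b" by (rule LIMSEQ_le_const2[OF L(1)]) (use pin less_imp_le in blast)
    moreover have "a < L" using L(2)[rule_format, of 0] pin[of 0] by linarith
    ultimately have Lb: "L = b" using fL dec by force
    have "eventually (\<lambda>n. y < p n) sequentially"
      using L(1) Lb y(2) by (simp add: order_tendstoD(1))
    then obtain n where "y < p n" by (meson eventually_sequentially order_refl)
    then show ?thesis using part1[of "p n" y] pin[of n] Wp[of n] y by simp
  qed
qed

definition C2fun :: "(real \<Rightarrow> real) \<Rightarrow> bool" where
  "C2fun f \<longleftrightarrow> (\<exists>f' f''. (\<forall>t. (f has_real_derivative f' t) (at t)) \<and>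
      (\<forall>t. (f' has_real_derivative f'' t) (at t)) \<and> continuous_on UNIV f'' \<and> (\<forall>t. f' t > 0))"

definition C1fun :: "(real \<Rightarrow> real) \<Rightarrow> bool" where
  "C1fun W \<longleftrightarrow> (\<exists>W'. (\<forall>t. (W has_real_derivative W' t) (at t)) \<and>
      continuous_on UNIV W' \<and> (\<forall>t. W' t > 0))"

lemma C2_imp_C1: "C2fun f \<Longrightarrow> C1fun f"
  unfolding C2fun_def C1fun_def
  by (meson DERIV_isCont continuous_at_imp_continuous_on)

lemma cont_reflect:
  fixes g :: "real \<Rightarrow> real"
  assumes "continuous_on UNIV g"
  shows "continuous_on UNIV (\<lambda>t. g (- t))"
proof -
  have g: "isCont g t" for t using assms by (simp add: continuous_on_eq_continuous_at)
  have "isCont (\<lambda>t. g (- t)) x" for x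
  proof -
    have "isCont (\<lambda>t. - t) x" by (intro continuous_intros)
    then show ?thesis using isCont_o2[where f="\<lambda>t. - t" and a=x and g=g] g by blast
  qed
  then show ?thesis by (simp add: continuous_at_imp_continuous_on)
qed

lemma deriv_reflect:
  fixes f :: "real \<Rightarrow> real"
  assumes "\<And>t. (f has_real_derivative f' t) (at t)"
  shows "((\<lambda>t. - f (- t)) has_real_derivative f' (- t)) (at t)"
proof -
  have "((\<lambda>t. - f (- t)) has_real_derivative - (f' (- t) * - 1)) (at t)"
    by (intro DERIV_minus DERIV_chain2[OF assms] DERIV_minus DERIV_ident)
  then show ?thesis by simp
qed

lemma deriv_reflect2:
  fixes f :: "real \<Rightarrow> real"
  assumes "\<And>t. (f has_real_derivative f' t) (at t)"
  shows "((\<lambda>t. f (- t)) has_real_derivative - f' (- t)) (at t)"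
proof -
  have "((\<lambda>t. f (- t)) has_real_derivative (f' (- t) * - 1)) (at t)"
    by (intro DERIV_chain2[OF assms] DERIV_minus DERIV_ident)
  then show ?thesis by simp
qed

lemma C2_reflect: "C2fun f \<Longrightarrow> C2fun (\<lambda>t. - f (- t))"
proof -
  assume "C2fun f"
  then obtain f' f'' where d: "\<And>t. (f has_real_derivative f' t) (at t)"
    "\<And>t. (f' has_real_derivative f'' t) (at t)" "continuous_on UNIV f''" "\<And>t. f' t > 0"
    unfolding C2fun_def by blast
  have "continuous_on UNIV (\<lambda>t. - f'' (- t))"
    using cont_reflect[OF d(3)] by (intro continuous_intros)
  then show "C2fun (\<lambda>t. - f (- t))" unfolding C2fun_def
    using deriv_reflect[OF d(1)] deriv_reflect2[OF d(2)] d(4)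
    by (intro exI[of _ "\<lambda>t. f' (- t)"] exI[of _ "\<lambda>t. - f'' (- t)"]) auto
qed

lemma C1_reflect: "C1fun W \<Longrightarrow> C1fun (\<lambda>t. - W (- t))"
proof -
  assume "C1fun W"
  then obtain W' where d: "\<And>t. (W has_real_derivative W' t) (at t)"
    "continuous_on UNIV W'" "\<And>t. W' t > 0"
    unfolding C1fun_def by blast
  have "continuous_on UNIV (\<lambda>t. W' (- t))"
    using cont_reflect[OF d(2)] .
  then show "C1fun (\<lambda>t. - W (- t))" unfolding C1fun_def
    using deriv_reflect[OF d(1)] d(3)
    by (intro exI[of _ "\<lambda>t. W' (- t)"]) auto
qed

lemma kopell_dec:
  assumes f: "C2fun f" and sf: "surj f" and W: "C1fun W"
    and comm: "\<And>t. f (W t) = W (f t)"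
    and ab: "a < b" and fa: "f a = a" and fb: "f b = b"
    and dec: "\<And>x. a < x \<Longrightarrow> x < b \<Longrightarrow> f x < x"
    and x0: "a < x0" "x0 < b" and Wx0: "W x0 = x0"
    and y: "a < y" "y < b"
  shows "W y = y"
proof -
  obtain f' f'' where d: "\<And>t. (f has_real_derivative f' t) (at t)"
    "\<And>t. (f' has_real_derivative f'' t) (at t)" "continuous_on UNIV f''" "\<And>t. f' t > 0"
    using f unfolding C2fun_def by blast
  obtain W' where e: "\<And>t. (W has_real_derivative W' t) (at t)"
    "continuous_on UNIV W'" "\<And>t. W' t > 0"
    using W unfolding C1fun_def by blast
  show ?thesis by (rule kopell_left[OF d e comm ab fa fb dec sf x0 Wx0 y])
qed

lemma kopell:
  assumes f: "C2fun f" and sf: "surj f" and W: "C1fun W"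
    and comm: "\<And>t. f (W t) = W (f t)"
    and ab: "a < b" and fa: "f a = a" and fb: "f b = b"
    and nofix: "\<And>x. a < x \<Longrightarrow> x < b \<Longrightarrow> f x \<noteq> x"
    and x0: "a < x0" "x0 < b" and Wx0: "W x0 = x0"
    and y: "a < y" "y < b"
  shows "W y = y"
proof -
  have cf: "continuous_on UNIV f" using f unfolding C2fun_def
    by (meson DERIV_isCont continuous_at_imp_continuous_on)
  have sign: "(\<forall>x. a < x \<and> x < b \<longrightarrow> f x < x) \<or> (\<forall>x. a < x \<and> x < b \<longrightarrow> f x > x)"
  proof (rule ccontr)
    assume "\<not> ?thesis"
    then obtain x1 x2 where x1: "a < x1" "x1 < b" "f x1 \<ge> x1" and x2: "a < x2" "x2 < b" "f x2 \<le> x2"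
      by (auto simp: not_less)
    have cg: "continuous_on {min x1 x2..max x1 x2} (\<lambda>x. f x - x)"
      using cf by (intro continuous_intros) (auto intro: continuous_on_subset)
    have "\<exists>z. min x1 x2 \<le> z \<and> z \<le> max x1 x2 \<and> f z - z = 0"
    proof (cases "x1 \<le> x2")
      case True
      then show ?thesis using IVT2'[of "\<lambda>x. f x - x" x2 0 x1] x1 x2 cg by auto
    next
      case False
      then show ?thesis using IVT'[of "\<lambda>x. f x - x" x2 0 x1] x1 x2 cg by auto
    qed
    then obtain z where "min x1 x2 \<le> z" "z \<le> max x1 x2" "f z = z" by auto
    then show False using nofix[of z] x1 x2 by auto
  qed
  show ?thesis
  proof (cases "\<forall>x. a < x \<and> x < b \<longrightarrow> f x < x")
    case True
    then show ?thesis using kopell_dec[OF f sf W comm ab fa fb _ x0 Wx0 y] by blast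
  next
    case False
    then have inc: "\<And>x. a < x \<Longrightarrow> x < b \<Longrightarrow> f x > x" using sign by blast
    let ?g = "\<lambda>t. - f (- t)" and ?V = "\<lambda>t. - W (- t)"
    have sg: "surj ?g"
    proof -
      have "?g (- inv_into UNIV f (- z)) = z" for z by (simp add: surj_f_inv_f[OF sf])
      then show ?thesis by (rule surjI)
    qed
    have c2: "\<And>t. ?g (?V t) = ?V (?g t)" using comm by simp
    have d2: "\<And>x. - b < x \<Longrightarrow> x < - a \<Longrightarrow> ?g x < x"
    proof -
      fix x :: real assume "- b < x" "x < - a"
      then have "- x < f (- x)" using inc[of "- x"] by simp
      then show "?g x < x" by simp
    qed
    have "?V (- y) = - y"
      by (rule kopell_dec[of ?g ?V "-b" "-a" "-x0" "-y", OF C2_reflect[OF f] sg C1_reflect[OF W] c2 _ _ _ d2])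
         (use fa fb x0 Wx0 y ab in auto)
    then show ?thesis by simp
  qed
qed

lemma C1_strict_mono: "C1fun W \<Longrightarrow> strict_mono W"
  unfolding C1fun_def using strict_mono_deriv by blast

lemma C1_cont: "C1fun W \<Longrightarrow> isCont W t"
  unfolding C1fun_def by (meson DERIV_isCont)

lemma C1_comp:
  assumes "C1fun W1" "C1fun W2" shows "C1fun (W1 \<circ> W2)"
proof -
  obtain D1 where d1: "\<And>t. (W1 has_real_derivative D1 t) (at t)" "continuous_on UNIV D1" "\<And>t. D1 t > 0"
    using assms(1) unfolding C1fun_def by blast
  obtain D2 where d2: "\<And>t. (W2 has_real_derivative D2 t) (at t)" "continuous_on UNIV D2" "\<And>t. D2 t > 0"
    using assms(2) unfolding C1fun_def by blast
  have der: "(W1 \<circ> W2 has_real_derivative D1 (W2 t) * D2 t) (at t)" for t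
    by (rule DERIV_chain[OF d1(1) d2(1)])
  have c1: "isCont D1 t" for t using d1(2) by (simp add: continuous_on_eq_continuous_at)
  have c2: "isCont D2 t" for t using d2(2) by (simp add: continuous_on_eq_continuous_at)
  have cW2: "isCont W2 t" for t using d2(1) by (meson DERIV_isCont)
  have "isCont (\<lambda>t. D1 (W2 t) * D2 t) t" for t
    using isCont_o2[OF cW2 c1] c2 by (intro isCont_mult) auto
  then have "continuous_on UNIV (\<lambda>t. D1 (W2 t) * D2 t)" by (simp add: continuous_at_imp_continuous_on)
  then show ?thesis unfolding C1fun_def using der d1(3) d2(3)
    by (intro exI[of _ "\<lambda>t. D1 (W2 t) * D2 t"]) auto
qed

lemma C1_funpow: "C1fun W \<Longrightarrow> C1fun (W ^^ n)"
proof (induction n)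
  case 0
  have "((\<lambda>x. x) has_real_derivative 1) (at t)" for t by (rule DERIV_ident)
  then show ?case unfolding C1fun_def by (intro exI[of _ "\<lambda>t. 1"]) (auto simp: id_def)
next
  case (Suc n) then show ?case using C1_comp[of W "W ^^ n"] by (simp add: o_def)
qed

lemma C1_inv:
  assumes W: "C1fun W" and bW: "bij W"
  shows "C1fun (inv_into UNIV W)"
proof -
  obtain D where d: "\<And>t. (W has_real_derivative D t) (at t)" "continuous_on UNIV D" "\<And>t. D t > 0"
    using W unfolding C1fun_def by blast
  let ?g = "inv_into UNIV W"
  have gW: "?g (W x) = x" for x using bW by (simp add: bij_def)
  have Wg: "W (?g y) = y" for y using bW by (simp add: bij_def surj_f_inv_f)
  have cW: "isCont W t" for t using d(1) by (meson DERIV_isCont)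
  have cg: "isCont ?g y" for y
  proof -
    have "isCont ?g (W (?g y))"
      by (rule isCont_inverse_function[of 1]) (auto simp: gW cW)
    then show ?thesis by (simp add: Wg)
  qed
  have der: "(?g has_real_derivative inverse (D (?g y))) (at y)" for y
  proof -
    have "DERIV W (?g y) :> D (?g y)" by (rule d(1))
    then show ?thesis
      by (rule DERIV_inverse_function[where a="y - 1" and b="y + 1"])
         (auto simp: Wg cg less_imp_neq[OF d(3), symmetric])
  qed
  have cD: "isCont D t" for t using d(2) by (simp add: continuous_on_eq_continuous_at)
  have "isCont (\<lambda>y. inverse (D (?g y))) y" for y
    using isCont_o2[OF cg cD] d(3) by (intro continuous_at_within_inverse) (auto simp: less_imp_neq[OF d(3), symmetric])
  then have "continuous_on UNIV (\<lambda>y. inverse (D (?g y)))" by (simp add: continuous_at_imp_continuous_on)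
  then show ?thesis unfolding C1fun_def using der d(3)
    by (intro exI[of _ "\<lambda>y. inverse (D (?g y))"]) auto
qed

lemma sign_const:
  fixes V :: "real \<Rightarrow> real"
  assumes cV: "\<And>t. isCont V t"
    and nofix: "\<And>x. a < x \<Longrightarrow> x < b \<Longrightarrow> V x \<noteq> x"
  shows "(\<forall>x. a < x \<and> x < b \<longrightarrow> V x < x) \<or> (\<forall>x. a < x \<and> x < b \<longrightarrow> V x > x)"
proof (rule ccontr)
  assume "\<not> ?thesis"
  then obtain x1 x2 where x1: "a < x1" "x1 < b" "V x1 \<ge> x1" and x2: "a < x2" "x2 < b" "V x2 \<le> x2"
    by (auto simp: not_less)
  have cf: "continuous_on UNIV V" using cV by (simp add: continuous_at_imp_continuous_on)
  have cg: "continuous_on {min x1 x2..max x1 x2} (\<lambda>x. V x - x)"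
    using cf by (intro continuous_intros) (auto intro: continuous_on_subset)
  have "\<exists>z. min x1 x2 \<le> z \<and> z \<le> max x1 x2 \<and> V z - z = 0"
  proof (cases "x1 \<le> x2")
    case True
    then show ?thesis using IVT2'[of "\<lambda>x. V x - x" x2 0 x1] x1 x2 cg by auto
  next
    case False
    then show ?thesis using IVT'[of "\<lambda>x. V x - x" x2 0 x1] x1 x2 cg by auto
  qed
  then obtain z where "min x1 x2 \<le> z" "z \<le> max x1 x2" "V z = z" by auto
  then show False using nofix[of z] x1 x2 by auto
qed

locale holder =
  fixes G :: "real \<Rightarrow> real" and a b :: real
  assumes G2: "C2fun G" and Gs: "surj G" and ab: "a < b" and Ga: "G a = a" and Gb: "G b = b"
    and Gnf: "\<And>x. a < x \<Longrightarrow> x < b \<Longrightarrow> G x \<noteq> x"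
begin

definition Gam :: "(real \<Rightarrow> real) set" where
  "Gam = {W. C1fun W \<and> bij W \<and> (\<forall>t. W (G t) = G (W t)) \<and> W a = a \<and> W b = b}"

definition lt :: "(real \<Rightarrow> real) \<Rightarrow> (real \<Rightarrow> real) \<Rightarrow> bool" where
  "lt V W \<longleftrightarrow> (\<forall>x. a < x \<and> x < b \<longrightarrow> V x < W x)"

definition le :: "(real \<Rightarrow> real) \<Rightarrow> (real \<Rightarrow> real) \<Rightarrow> bool" where
  "le V W \<longleftrightarrow> (\<forall>x. a < x \<and> x < b \<longrightarrow> V x \<le> W x)"

definition eqab :: "(real \<Rightarrow> real) \<Rightarrow> (real \<Rightarrow> real) \<Rightarrow> bool" where
  "eqab V W \<longleftrightarrow> (\<forall>x. a < x \<and> x < b \<longrightarrow> V x = W x)"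

abbreviation iv :: "(real \<Rightarrow> real) \<Rightarrow> real \<Rightarrow> real" where
  "iv W \<equiv> inv_into UNIV W"

lemma GamD:
  assumes "W \<in> Gam"
  shows "C1fun W" "bij W" "\<And>t. W (G t) = G (W t)" "W a = a" "W b = b" "strict_mono W"
    "\<And>t. isCont W t"
  using assms C1_strict_mono C1_cont unfolding Gam_def by auto

lemma Gam_iv_simps:
  assumes "W \<in> Gam"
  shows "W (iv W y) = y" "iv W (W x) = x"
  using GamD(2)[OF assms] by (auto simp: bij_def surj_f_inv_f)

lemma Gam_in:
  assumes "W \<in> Gam" "a < x" "x < b" shows "a < W x" "W x < b"
proof -
  have "W a < W x" "W x < W b" using GamD(6)[OF assms(1)] assms(2,3) by (simp_all add: strict_mono_less)
  then show "a < W x" "W x < b" using GamD(4,5)[OF assms(1)] by simp_all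
qed

lemma Gam_id: "id \<in> Gam"
proof -
  have "((\<lambda>x. x) has_real_derivative 1) (at t)" for t by (rule DERIV_ident)
  then have "C1fun id" unfolding C1fun_def by (intro exI[of _ "\<lambda>t. 1"]) (auto simp: id_def)
  then show ?thesis unfolding Gam_def by auto
qed

lemma Gam_id': "(\<lambda>x. x) \<in> Gam" using Gam_id by (simp add: id_def)

lemma Gam_comp:
  assumes "V \<in> Gam" "W \<in> Gam" shows "V \<circ> W \<in> Gam"
  using GamD[OF assms(1)] GamD[OF assms(2)] C1_comp[of V W] unfolding Gam_def
  by (auto intro: bij_comp)

lemma Gam_inv:
  assumes "W \<in> Gam" shows "iv W \<in> Gam"
proof -
  note g = GamD[OF assms]
  have "C1fun (iv W)" by (rule C1_inv[OF g(1) g(2)])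
  moreover have "bij (iv W)" using g(2) by (simp add: bij_imp_bij_inv)
  moreover have "iv W (G t) = G (iv W t)" for t
  proof -
    have "W (G (iv W t)) = G t" using g(3) Gam_iv_simps[OF assms] by simp
    then show ?thesis using Gam_iv_simps[OF assms] by metis
  qed
  moreover have "iv W a = a" "iv W b = b" using g(4,5) Gam_iv_simps[OF assms] by metis+
  ultimately show ?thesis unfolding Gam_def by auto
qed

lemma Gam_pow: "W \<in> Gam \<Longrightarrow> W ^^ n \<in> Gam"
proof (induction n)
  case 0 then show ?case using Gam_id' by simp
next
  case (Suc n) then show ?case using Gam_comp[of W "W ^^ n"] by (simp add: o_def)
qed

lemma free:
  assumes W: "W \<in> Gam" and x0: "a < x0" "x0 < b" "W x0 = x0"
  shows "eqab W id"
  unfolding eqab_def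
proof (intro allI impI)
  fix y assume y: "a < y \<and> y < b"
  have "W y = y"
    by (rule kopell[OF G2 Gs GamD(1)[OF W] _ ab Ga Gb Gnf x0]) (use GamD(3)[OF W] y in auto)
  then show "W y = id y" by simp
qed

lemma trich:
  assumes V: "V \<in> Gam" and W: "W \<in> Gam"
  shows "lt V W \<or> lt W V \<or> eqab V W"
proof -
  let ?U = "iv W \<circ> V"
  have U: "?U \<in> Gam" using Gam_comp[OF Gam_inv[OF W] V] .
  have key: "W (?U x) = V x" for x using Gam_iv_simps[OF W] by simp
  note smW = GamD(6)[OF W]
  show ?thesis
  proof (cases "\<exists>x0. a < x0 \<and> x0 < b \<and> ?U x0 = x0")
    case True
    then obtain x0 where "a < x0" "x0 < b" "?U x0 = x0" by blast
    then have "eqab ?U id" using free[OF U] by blast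
    then have "eqab V W" unfolding eqab_def using key by (metis id_apply)
    then show ?thesis by simp
  next
    case False
    then have "\<And>x. a < x \<Longrightarrow> x < b \<Longrightarrow> ?U x \<noteq> x" by blast
    then have "(\<forall>x. a < x \<and> x < b \<longrightarrow> ?U x < x) \<or> (\<forall>x. a < x \<and> x < b \<longrightarrow> ?U x > x)"
      using sign_const[of ?U a b] GamD(7)[OF U] by blast
    then show ?thesis
    proof
      assume h: "\<forall>x. a < x \<and> x < b \<longrightarrow> ?U x < x"
      have "lt V W" unfolding lt_def
      proof (intro allI impI)
        fix x assume "a < x \<and> x < b"
        then have "W (?U x) < W x" using h smW by (simp add: strict_mono_less)
        then show "V x < W x" using key by simp
      qed
      then show ?thesis by simp
    next
      assume h: "\<forall>x. a < x \<and> x < b \<longrightarrow> ?U x > x"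
      have "lt W V" unfolding lt_def
      proof (intro allI impI)
        fix x assume "a < x \<and> x < b"
        then have "W (?U x) > W x" using h smW by (simp add: strict_mono_less)
        then show "W x < V x" using key by simp
      qed
      then show ?thesis by simp
    qed
  qed
qed

lemma le_iff: "V \<in> Gam \<Longrightarrow> W \<in> Gam \<Longrightarrow> \<not> lt W V \<Longrightarrow> le V W"
proof -
  assume "V \<in> Gam" "W \<in> Gam" "\<not> lt W V"
  then have "lt V W \<or> eqab V W" using trich[of V W] by blast
  then show "le V W" unfolding lt_def le_def eqab_def by (auto simp: less_imp_le)
qed

lemma arch:
  assumes d: "d \<in> Gam" "lt id d" and F: "F \<in> Gam"
  shows "\<exists>m. lt F (d ^^ m)"
proof -
  define x0 where "x0 = (a + b) / 2"
  have x0: "a < x0" "x0 < b" using ab by (auto simp: x0_def)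
  have "\<exists>m. (d ^^ m) x0 > F x0"
  proof (rule ccontr)
    assume "\<not> ?thesis"
    then have bnd: "\<forall>m. (d ^^ m) x0 \<le> F x0" by (simp add: not_less)
    have inab: "a < (d ^^ m) x0 \<and> (d ^^ m) x0 < b" for m
      using Gam_in[OF Gam_pow[OF d(1)] x0] by auto
    have inc: "(d ^^ m) x0 < (d ^^ Suc m) x0" for m
      using d(2) inab[of m] unfolding lt_def by simp
    then have "incseq (\<lambda>m. (d ^^ m) x0)" by (simp add: incseq_SucI less_imp_le)
    then obtain L where L: "(\<lambda>m. (d ^^ m) x0) \<longlonglongrightarrow> L" "\<forall>i. (d ^^ i) x0 \<le> L"
      using incseq_convergent bnd by blast
    have "(\<lambda>m. d ((d ^^ m) x0)) \<longlonglongrightarrow> d L" using L(1) GamD(7)[OF d(1)] isCont_tendsto_compose by blast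
    moreover have "(\<lambda>m. d ((d ^^ m) x0)) \<longlonglongrightarrow> L" using LIMSEQ_Suc[OF L(1)] by simp
    ultimately have dL: "d L = L" using LIMSEQ_unique by blast
    have "L \<le> F x0" by (rule LIMSEQ_le_const2[OF L(1)]) (use bnd in blast)
    moreover have "F x0 < b" using Gam_in[OF F x0] by simp
    moreover have "a < L" using L(2)[rule_format, of 0] x0 by simp
    ultimately show False using d(2) dL unfolding lt_def by force
  qed
  then obtain m where m: "(d ^^ m) x0 > F x0" by blast
  have "lt F (d ^^ m)"
    using trich[OF F Gam_pow[OF d(1)], of m] m x0 unfolding lt_def eqab_def by force
  then show ?thesis by blast
qed

lemma level:
  assumes d: "d \<in> Gam" "lt id d" and F: "F \<in> Gam" "lt id F"
  shows "\<exists>m. le (d ^^ m) F \<and> lt F (d ^^ Suc m)"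
proof -
  have ex: "\<exists>k. lt F (d ^^ k)" using arch[OF d F(1)] .
  define k where "k = (LEAST k. lt F (d ^^ k))"
  have k: "lt F (d ^^ k)" using LeastI_ex[OF ex] by (simp add: k_def)
  have "k \<noteq> 0"
  proof
    assume "k = 0"
    then have "lt F id" using k by simp
    then show False using F(2) ab unfolding lt_def
      by (metis dense less_asym)
  qed
  then obtain m where km: "k = Suc m" using not0_implies_Suc by blast
  have "\<not> lt F (d ^^ m)" using not_less_Least[of m "\<lambda>k. lt F (d ^^ k)"] km k_def by simp
  then have "le (d ^^ m) F" using le_iff[OF Gam_pow[OF d(1)] F(1)] by blast
  then show ?thesis using k km by blast
qed

end

context holder begin

lemma iv_le_iff:
  assumes E: "E \<in> Gam" shows "x \<le> iv E y \<longleftrightarrow> E x \<le> y" "iv E y \<le> x \<longleftrightarrow> y \<le> E x"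
    "x < iv E y \<longleftrightarrow> E x < y"
proof -
  have sm: "strict_mono E" using GamD(6)[OF E] .
  have e: "E (iv E y) = y" using Gam_iv_simps[OF E] by simp
  show "x \<le> iv E y \<longleftrightarrow> E x \<le> y" using strict_mono_less_eq[OF sm, of x "iv E y"] e by simp
  show "iv E y \<le> x \<longleftrightarrow> y \<le> E x" using strict_mono_less_eq[OF sm, of "iv E y" x] e by simp
  show "x < iv E y \<longleftrightarrow> E x < y" using strict_mono_less[OF sm, of x "iv E y"] e by simp
qed

lemma mid: "a < (a + b) / 2" "(a + b) / 2 < b" using ab by auto

lemma funpow_two_mn: "(d ^^ Suc m) ((d ^^ Suc n) x) = d (d ((d ^^ n) ((d ^^ m) x)))"
proof -
  have A: "(d ^^ Suc m) ((d ^^ Suc n) x) = (d ^^ (Suc m + Suc n)) x" by (simp only: funpow_add o_apply)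
  have B: "(d ^^ (Suc (Suc (n + m)))) x = d (d ((d ^^ n) ((d ^^ m) x)))"
    by (simp only: funpow.simps o_apply funpow_add)
  have C: "Suc m + Suc n = Suc (Suc (n + m))" by simp
  show ?thesis using A B C by (simp add: add.commute)
qed

lemma power_rep:
  assumes e: "e \<in> Gam" "lt id e" and least: "\<And>g. g \<in> Gam \<Longrightarrow> lt id g \<Longrightarrow> le e g"
    and X: "X \<in> Gam" "lt id X"
  shows "\<exists>m. eqab X (e ^^ m)"
proof -
  obtain m where m: "le (e ^^ m) X" "lt X (e ^^ Suc m)" using level[OF e X] by blast
  let ?E = "e ^^ m"
  have E: "?E \<in> Gam" using Gam_pow[OF e(1)] .
  let ?g = "iv ?E \<circ> X"
  have g: "?g \<in> Gam" using Gam_comp[OF Gam_inv[OF E] X(1)] .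
  have ge: "x \<le> ?g x" if "a < x" "x < b" for x
    using m(1) that iv_le_iff(1)[OF E] unfolding le_def by simp
  have nlt: "\<not> lt id ?g"
  proof
    assume "lt id ?g"
    then have "le e ?g" using least[OF g] by blast
    define x where "x = (a + b) / 2"
    have x: "a < x" "x < b" using mid by (auto simp: x_def)
    have "e x \<le> ?g x" using \<open>le e ?g\<close> x unfolding le_def by blast
    then have "?E (e x) \<le> X x" using iv_le_iff(1)[OF E] by simp
    moreover have "?E (e x) = (e ^^ Suc m) x" by (simp add: funpow_swap1)
    moreover have "X x < (e ^^ Suc m) x" using m(2) x unfolding lt_def by blast
    ultimately show False by simp
  qed
  have "\<not> lt ?g id" using ge mid unfolding lt_def by (metis id_apply not_less)
  then have "eqab ?g id" using trich[OF g Gam_id] nlt by blast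
  then have "eqab X ?E" unfolding eqab_def using Gam_iv_simps[OF E] by (metis comp_apply id_apply)
  then show ?thesis by blast
qed

lemma holder_aux:
  assumes F: "F \<in> Gam" "lt id F" and H: "H \<in> Gam" "lt id H"
    and QP: "lt (H \<circ> F) (F \<circ> H)"
  shows False
proof -
  let ?P = "F \<circ> H" and ?Q = "H \<circ> F"
  have P: "?P \<in> Gam" using Gam_comp[OF F(1) H(1)] .
  have Q: "?Q \<in> Gam" using Gam_comp[OF H(1) F(1)] .
  define e where "e = ?P \<circ> iv ?Q"
  have e: "e \<in> Gam" unfolding e_def using Gam_comp[OF P Gam_inv[OF Q]] .
  have eQ: "e (?Q x) = ?P x" for x unfolding e_def using Gam_iv_simps[OF Q] by simp
  have epos: "lt id e" unfolding lt_def
  proof (intro allI impI)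
    fix y assume y: "a < y \<and> y < b"
    let ?z = "iv ?Q y"
    have z: "a < ?z" "?z < b" using Gam_in[OF Gam_inv[OF Q]] y by auto
    have "?Q ?z < ?P ?z" using QP z unfolding lt_def by blast
    moreover have "?Q ?z = y" using Gam_iv_simps[OF Q] by simp
    ultimately show "id y < e y" unfolding e_def by simp
  qed
  define x where "x = (a + b) / 2"
  have x: "a < x" "x < b" using mid by (auto simp: x_def)
  have Fx: "a < F x" "F x < b" using Gam_in[OF F(1) x] by auto
  have Hx: "a < H x" "H x < b" using Gam_in[OF H(1) x] by auto
  have Qx: "a < ?Q x" "?Q x < b" using Gam_in[OF Q x] by auto
  show False
  proof (cases "\<exists>d\<in>Gam. lt id d \<and> le (d \<circ> d) e")
    case True
    then obtain d where d: "d \<in> Gam" "lt id d" "le (d \<circ> d) e" by blast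
    obtain m where m: "le (d ^^ m) F" "lt F (d ^^ Suc m)" using level[OF d(1,2) F] by blast
    obtain n where n: "le (d ^^ n) H" "lt H (d ^^ Suc n)" using level[OF d(1,2) H] by blast
    have smd: "strict_mono (d ^^ k)" for k using GamD(6)[OF Gam_pow[OF d(1)]] .
    have smd1: "strict_mono d" using GamD(6)[OF d(1)] .
    have "?P x = F (H x)" by simp
    also have "\<dots> < (d ^^ Suc m) (H x)" using m(2) Hx unfolding lt_def by blast
    also have "\<dots> < (d ^^ Suc m) ((d ^^ Suc n) x)"
      using n(2) x unfolding lt_def by (intro strict_monoD[OF smd[of "Suc m"]]) blast
    also have "\<dots> = d (d ((d ^^ n) ((d ^^ m) x)))" by (rule funpow_two_mn)
    also have "\<dots> \<le> d (d (?Q x))"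
    proof -
      have "(d ^^ m) x \<le> F x" using m(1) x unfolding le_def by blast
      then have "(d ^^ n) ((d ^^ m) x) \<le> (d ^^ n) (F x)" using smd[of n] by (simp add: strict_mono_less_eq)
      also have "\<dots> \<le> H (F x)" using n(1) Fx unfolding le_def by blast
      finally have "(d ^^ n) ((d ^^ m) x) \<le> ?Q x" by simp
      then show ?thesis using smd1 by (simp add: strict_mono_less_eq)
    qed
    also have "\<dots> \<le> e (?Q x)" using d(3) Qx unfolding le_def by auto
    also have "\<dots> = ?P x" by (rule eQ)
    finally show False by simp
  next
    case False
    have least: "le e g" if g: "g \<in> Gam" "lt id g" for g
    proof (rule ccontr)
      assume nle: "\<not> le e g"
      have "lt g e"
      proof -
        have "\<not> lt e g" using nle unfolding lt_def le_def by (auto simp: less_imp_le)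
        moreover have "\<not> eqab g e" using nle unfolding eqab_def le_def by auto
        ultimately show ?thesis using trich[OF g(1) e] by blast
      qed
      show False
      proof (cases "le (g \<circ> g) e")
        case True then show False using False g by blast
      next
        case False
        then have "lt e (g \<circ> g)" using le_iff[OF Gam_comp[OF g(1) g(1)] e] by blast
        define dd where "dd = e \<circ> iv g"
        have dd: "dd \<in> Gam" unfolding dd_def using Gam_comp[OF e Gam_inv[OF g(1)]] .
        have ddg: "dd y < g y" if "a < y" "y < b" for y
        proof -
          have z: "a < iv g y" "iv g y < b" using Gam_in[OF Gam_inv[OF g(1)]] that by auto
          have "e (iv g y) < g (g (iv g y))" using \<open>lt e (g \<circ> g)\<close> z unfolding lt_def by auto
          then show ?thesis unfolding dd_def using Gam_iv_simps[OF g(1)] by simp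
        qed
        have ddpos: "lt id dd" unfolding lt_def
        proof (intro allI impI)
          fix y assume y: "a < y \<and> y < b"
          have z: "a < iv g y" "iv g y < b" using Gam_in[OF Gam_inv[OF g(1)]] y by auto
          have "g (iv g y) < e (iv g y)" using \<open>lt g e\<close> z unfolding lt_def by auto
          then show "id y < dd y" unfolding dd_def using Gam_iv_simps[OF g(1)] by simp
        qed
        have "le (dd \<circ> dd) e" unfolding le_def
        proof (intro allI impI)
          fix y assume y: "a < y \<and> y < b"
          have dy: "a < dd y" "dd y < b" using Gam_in[OF dd] y by auto
          have "dd (dd y) < dd (g y)"
            using ddg y GamD(6)[OF dd] by (simp add: strict_mono_less)
          also have "dd (g y) = e y" unfolding dd_def using Gam_iv_simps[OF g(1)] by simp
          finally show "(dd \<circ> dd) y \<le> e y" by simp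
        qed
        then show False using \<open>\<not> (\<exists>d\<in>Gam. lt id d \<and> le (d \<circ> d) e)\<close> dd ddpos by blast
      qed
    qed
    obtain m where m: "eqab F (e ^^ m)" using power_rep[OF e epos least F] by blast
    obtain n where n: "eqab H (e ^^ n)" using power_rep[OF e epos least H] by blast
    have "?P x = (e ^^ m) ((e ^^ n) x)" using m n x Hx unfolding eqab_def by simp
    also have "\<dots> = (e ^^ (m + n)) x" by (simp only: funpow_add o_apply)
    also have "\<dots> = (e ^^ n) ((e ^^ m) x)" by (simp only: add.commute[of m n] funpow_add o_apply)
    also have "\<dots> = ?Q x" using m n x Fx unfolding eqab_def by simp
    finally show False using QP x unfolding lt_def by auto
  qed
qed

lemma holder_pos:
  assumes F: "F \<in> Gam" "lt id F" and H: "H \<in> Gam" "lt id H"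
  shows "eqab (F \<circ> H) (H \<circ> F)"
  using trich[OF Gam_comp[OF F(1) H(1)] Gam_comp[OF H(1) F(1)]] holder_aux[OF F H] holder_aux[OF H F]
  by blast

lemma pos_version:
  assumes X: "X \<in> Gam"
  shows "eqab X id \<or> lt id X \<or> (lt id (iv X))"
proof -
  have "lt X id \<Longrightarrow> lt id (iv X)" unfolding lt_def
  proof (intro allI impI)
    fix y assume h: "\<forall>x. a < x \<and> x < b \<longrightarrow> X x < id x" and y: "a < y \<and> y < b"
    have z: "a < iv X y" "iv X y < b" using Gam_in[OF Gam_inv[OF X]] y by auto
    have "X (iv X y) < iv X y" using h z by auto
    then show "id y < iv X y" using Gam_iv_simps[OF X] by simp
  qed
  then show ?thesis using trich[OF X Gam_id] by (auto simp: eqab_def)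
qed

lemma comm_from_inv:
  assumes X: "X \<in> Gam" and Y: "Y \<in> Gam" and c: "eqab (iv X \<circ> Y) (Y \<circ> iv X)"
  shows "eqab (X \<circ> Y) (Y \<circ> X)"
  unfolding eqab_def
proof (intro allI impI)
  fix x assume x: "a < x \<and> x < b"
  have Xx: "a < X x" "X x < b" using Gam_in[OF X] x by auto
  have "iv X (Y (X x)) = Y (iv X (X x))" using c Xx unfolding eqab_def by simp
  then have "iv X (Y (X x)) = Y x" using Gam_iv_simps[OF X] by simp
  then have "X (iv X (Y (X x))) = X (Y x)" by simp
  then show "(X \<circ> Y) x = (Y \<circ> X) x" using Gam_iv_simps[OF X] by simp
qed

lemma eqab_sym: "eqab (X \<circ> Y) (Y \<circ> X) \<Longrightarrow> eqab (Y \<circ> X) (X \<circ> Y)"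
  unfolding eqab_def by auto

lemma holder_comm:
  assumes F: "F \<in> Gam" and H: "H \<in> Gam"
  shows "eqab (F \<circ> H) (H \<circ> F)"
proof -
  have triv: "eqab (X \<circ> Y) (Y \<circ> X)" if "eqab X id" "Y \<in> Gam" for X Y
    unfolding eqab_def
  proof (intro allI impI)
    fix x assume x: "a < x \<and> x < b"
    have "a < Y x" "Y x < b" using Gam_in[OF that(2)] x by auto
    then show "(X \<circ> Y) x = (Y \<circ> X) x" using that(1) x unfolding eqab_def by simp
  qed
  have caseF: "eqab (F' \<circ> H) (H \<circ> F')" if F': "F' \<in> Gam" "lt id F'" for F'
  proof -
    consider "eqab H id" | "lt id H" | "lt id (iv H)" using pos_version[OF H] by blast
    then show ?thesis
    proof cases
      case 1 then show ?thesis using triv[OF 1 F'(1)] eqab_sym by blast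
    next
      case 2 then show ?thesis using holder_pos[OF F' H 2] by blast
    next
      case 3
      have "eqab (iv H \<circ> F') (F' \<circ> iv H)" using holder_pos[OF Gam_inv[OF H] 3 F'] .
      then show ?thesis using comm_from_inv[OF H F'(1)] eqab_sym by blast
    qed
  qed
  consider "eqab F id" | "lt id F" | "lt id (iv F)" using pos_version[OF F] by blast
  then show ?thesis
  proof cases
    case 1 then show ?thesis using triv[OF 1 H] by blast
  next
    case 2 then show ?thesis using caseF[OF F 2] by blast
  next
    case 3
    have "eqab (iv F \<circ> H) (H \<circ> iv F)" using caseF[OF Gam_inv[OF F] 3] .
    then show ?thesis using comm_from_inv[OF F H] by blast
  qed
qed

end

definition liftok :: "(real \<Rightarrow> real) \<Rightarrow> bool" where
  "liftok F \<longleftrightarrow> C2fun F \<and> (\<forall>t. F (t + 1) = F t + 1) \<and> (\<exists>t. F t = t) \<and> interior {t. F t = t} = {}"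

lemma C2_cont: "C2fun F \<Longrightarrow> isCont F t"
  using C1_cont C2_imp_C1 by blast

lemma shift_int:
  fixes F :: "real \<Rightarrow> real"
  assumes p: "\<And>t. F (t + 1) = F t + 1"
  shows "F (t + real_of_int k) = F t + real_of_int k"
proof -
  have pos: "F (t + real n) = F t + real n" for t n
  proof (induction n)
    case 0 then show ?case by simp
  next
    case (Suc n)
    have "F (t + real (Suc n)) = F ((t + real n) + 1)" by (simp add: algebra_simps)
    also have "\<dots> = F t + real (Suc n)" using p Suc by simp
    finally show ?case .
  qed
  show ?thesis
  proof (cases "k \<ge> 0")
    case True
    then obtain n where "k = int n" by (metis nonneg_int_cases)
    then show ?thesis using pos by simp
  next
    case False
    then obtain n where n: "k = - int n" by (metis le_less nonpos_int_cases not_le)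
    have "F (t + real_of_int k) + real n = F (t + real_of_int k + real n)" using pos by simp
    also have "t + real_of_int k + real n = t" using n by simp
    finally show ?thesis using n by simp
  qed
qed

lemma liftok_surj:
  assumes "liftok F" shows "surj F"
proof -
  have p: "\<And>t. F (t + 1) = F t + 1" and c: "\<And>t. isCont F t"
    using assms C2_cont unfolding liftok_def by auto
  have "\<exists>x. F x = y" for y
  proof -
    define k1 where "k1 = floor (y - F 0)"
    define k2 where "k2 = ceiling (y - F 0)"
    have F1: "F (real_of_int k1) \<le> y" using shift_int[of F, OF p, of 0 k1] by (simp add: k1_def) linarith
    have F2: "y \<le> F (real_of_int k2)" using shift_int[of F, OF p, of 0 k2] by (simp add: k2_def) linarith
    have "real_of_int k1 \<le> real_of_int k2" unfolding k1_def k2_def by (simp add: floor_le_ceiling)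
    moreover have "continuous_on {real_of_int k1..real_of_int k2} F"
      using c by (simp add: continuous_at_imp_continuous_on)
    ultimately show ?thesis using IVT'[of F "real_of_int k1" y "real_of_int k2"] F1 F2 by blast
  qed
  then show ?thesis by (metis surjI)
qed

lemma liftok_bij:
  assumes "liftok F" shows "bij F" "strict_mono F"
proof -
  have "strict_mono F" using assms C1_strict_mono C2_imp_C1 unfolding liftok_def by blast
  then show "bij F" "strict_mono F" using liftok_surj[OF assms] strict_mono_imp_inj_on bij_def by blast+
qed

lemma component:
  assumes ok: "liftok F" and x: "F x \<noteq> x"
  obtains a b where "a < x" "x < b" "F a = a" "F b = b" "\<And>y. a < y \<Longrightarrow> y < b \<Longrightarrow> F y \<noteq> y"
proof -
  have p: "\<And>t. F (t + 1) = F t + 1" and c: "\<And>t. isCont F t"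
    using ok C2_cont unfolding liftok_def by auto
  obtain t0 where t0: "F t0 = t0" using ok unfolding liftok_def by auto
  let ?P = "{t. F t = t}"
  have cl: "closed ?P"
  proof -
    have "continuous_on UNIV (\<lambda>t. F t - t)" using c by (intro continuous_intros) (simp add: continuous_at_imp_continuous_on)
    then have "closed {t \<in> UNIV. F t - t = 0}" by (intro continuous_closed_preimage_constant) auto
    then show ?thesis by simp
  qed
  have perP: "F (t0 + real_of_int k) = t0 + real_of_int k" for k using shift_int[of F, OF p] t0 by simp
  define S1 where "S1 = {t. F t = t \<and> t < x}"
  define S2 where "S2 = {t. F t = t \<and> x < t}"
  have S1ne: "S1 \<noteq> {}"
  proof -
    define k where "k = floor (x - t0) - 1"
    have "t0 + real_of_int k < x" unfolding k_def by linarith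
    then show ?thesis using perP[of k] unfolding S1_def by blast
  qed
  have S2ne: "S2 \<noteq> {}"
  proof -
    define k where "k = ceiling (x - t0) + 1"
    have "x < t0 + real_of_int k" unfolding k_def by linarith
    then show ?thesis using perP[of k] unfolding S2_def by blast
  qed
  have S1b: "bdd_above S1" unfolding S1_def bdd_above_def by (auto intro: less_imp_le)
  have S2b: "bdd_below S2" unfolding S2_def bdd_below_def by (auto intro: less_imp_le)
  define a where "a = Sup S1"
  define b where "b = Inf S2"
  have aS: "a \<in> closure S1" unfolding a_def using S1ne S1b by (rule closure_contains_Sup)
  have bS: "b \<in> closure S2" unfolding b_def using S2ne S2b by (rule closure_contains_Inf)
  have clS1: "closure S1 \<subseteq> {t. F t = t \<and> t \<le> x}"
  proof (rule closure_minimal)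
    show "S1 \<subseteq> {t. F t = t \<and> t \<le> x}" unfolding S1_def by auto
    have "closed ({t. F t = t} \<inter> {..x})" using cl by (intro closed_Int) auto
    then show "closed {t. F t = t \<and> t \<le> x}" by (simp add: Int_def atMost_def)
  qed
  have clS2: "closure S2 \<subseteq> {t. F t = t \<and> x \<le> t}"
  proof (rule closure_minimal)
    show "S2 \<subseteq> {t. F t = t \<and> x \<le> t}" unfolding S2_def by auto
    have "closed ({t. F t = t} \<inter> {x..})" using cl by (intro closed_Int) auto
    then show "closed {t. F t = t \<and> x \<le> t}" by (simp add: Int_def atLeast_def)
  qed
  have a: "F a = a" "a \<le> x" using aS clS1 by auto
  have b: "F b = b" "x \<le> b" using bS clS2 by auto
  have ax: "a < x" using a x by (metis order_le_less)
  have xb: "x < b" using b x by (metis order_le_less)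
  have nofix: "F y \<noteq> y" if "a < y" "y < b" for y
  proof
    assume fy: "F y = y"
    show False
    proof (cases "y < x")
      case True
      then have "y \<in> S1" using fy unfolding S1_def by simp
      then have "y \<le> a" unfolding a_def using S1b by (rule cSup_upper)
      then show False using that by simp
    next
      case False
      then have "x < y" using x fy by (metis linorder_neqE_linordered_idom)
      then have "y \<in> S2" using fy unfolding S2_def by simp
      then have "b \<le> y" unfolding b_def using S2b by (rule cInf_lower)
      then show False using that by simp
    qed
  qed
  show ?thesis using that ax xb a(1) b(1) nofix by blast
qed

lemma fix_sub:
  assumes F: "liftok F" and G: "liftok G" and comm: "\<And>t. F (G t) = G (F t)"
    and xG: "G x = x"
  shows "F x = x"
proof (rule ccontr)
  assume xF: "F x \<noteq> x"
  obtain a b where ab: "a < x" "x < b" "F a = a" "F b = b" and nf: "\<And>y. a < y \<Longrightarrow> y < b \<Longrightarrow> F y \<noteq> y"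
    using component[OF F xF] by blast
  have smG: "strict_mono G" and bG: "bij G" using liftok_bij[OF G] by auto
  have low: "z \<le> a" if "F z = z" "z < x" for z using nf[of z] that ab by force
  have high: "b \<le> z" if "F z = z" "x < z" for z using nf[of z] that ab by force
  have fixF_G: "F (G z) = G z" if "F z = z" for z using comm[of z] that by simp
  have fixF_Ginv: "F y = y" if "G y = z" "F z = z" for y z
  proof -
    have "G (F y) = G y" using comm[of y] that by simp
    then show ?thesis using bG by (simp add: bij_def inj_eq)
  qed
  obtain ya where ya: "G ya = a" using bij_is_surj[OF bG] by (metis surj_f_inv_f)
  obtain yb where yb: "G yb = b" using bij_is_surj[OF bG] by (metis surj_f_inv_f)
  have Ga: "G a = a"
  proof -
    have "G a < G x" using smG ab by (simp add: strict_mono_less)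
    then have "G a \<le> a" using low[OF fixF_G[OF ab(3)]] xG by simp
    moreover have "ya < x" using ya xG ab smG by (metis strict_mono_less)
    then have "ya \<le> a" using low[OF fixF_Ginv[OF ya ab(3)]] by simp
    then have "a \<le> G a" using ya smG by (metis strict_mono_less_eq)
    ultimately show ?thesis by simp
  qed
  have Gb: "G b = b"
  proof -
    have "G x < G b" using smG ab by (simp add: strict_mono_less)
    then have "b \<le> G b" using high[OF fixF_G[OF ab(4)]] xG by simp
    moreover have "x < yb" using yb xG ab smG by (metis strict_mono_less)
    then have "b \<le> yb" using high[OF fixF_Ginv[OF yb ab(4)]] by simp
    then have "G b \<le> b" using yb smG by (metis strict_mono_less_eq)
    ultimately show ?thesis by simp
  qed
  have idG: "G y = y" if "a < y" "y < b" for y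
    by (rule kopell[of F G a b x y])
       (use F G comm ab nf xG that liftok_surj[OF F] C2_imp_C1 in \<open>auto simp: liftok_def\<close>)
  have "{a<..<b} \<subseteq> {t. G t = t}" using idG by auto
  then have "{a<..<b} \<subseteq> interior {t. G t = t}" by (intro interior_maximal) auto
  then show False using G ab unfolding liftok_def by auto
qed

lemma fix_eq:
  assumes F: "liftok F" and G: "liftok G" and comm: "\<And>t. F (G t) = G (F t)"
  shows "F x = x \<longleftrightarrow> G x = x"
  using fix_sub[OF F G comm] fix_sub[OF G F comm[symmetric]] by blast

lemma lift_trans:
  assumes A: "liftok A" and B: "liftok B" and C: "liftok C"
    and AC: "\<And>t. A (C t) = C (A t)" and BC: "\<And>t. B (C t) = C (B t)"
  shows "A (B x) = B (A x)"
proof (cases "C x = x")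
  case True
  then have "A x = x" "B x = x" using fix_eq[OF A C AC] fix_eq[OF B C BC] by auto
  then show ?thesis by simp
next
  case False
  obtain a b where abx: "a < x" "x < b" "C a = a" "C b = b" and nf: "\<And>y. a < y \<Longrightarrow> y < b \<Longrightarrow> C y \<noteq> y"
    using component[OF C False] by blast
  interpret holder C a b
    using C abx nf liftok_surj[OF C] by unfold_locales (auto simp: liftok_def)
  have AG: "A \<in> Gam"
    unfolding Gam_def using A AC abx fix_eq[OF A C AC] liftok_bij[OF A] C2_imp_C1
    by (auto simp: liftok_def)
  have BG: "B \<in> Gam"
    unfolding Gam_def using B BC abx fix_eq[OF B C BC] liftok_bij[OF B] C2_imp_C1
    by (auto simp: liftok_def)
  show ?thesis using holder_comm[OF AG BG] abx unfolding eqab_def by auto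
qed

lemma cis2_eq: "cis (2 * pi * u) = cis (2 * pi * v) \<longleftrightarrow> (\<exists>k::int. u = v + of_int k)"
proof
  assume h: "cis (2 * pi * u) = cis (2 * pi * v)"
  have "cis (2 * pi * u - 2 * pi * v) = 1" using h cis_divide[of "2 * pi * u" "2 * pi * v"] by simp
  then have "cos (2 * pi * u - 2 * pi * v) = 1" by (metis cis.sel(1) one_complex.sel(1))
  then obtain n :: int where n: "2 * pi * u - 2 * pi * v = of_int n * 2 * pi" using cos_one_2pi_int by blast
  have "(2 * pi) * (u - v) = (2 * pi) * of_int n" using n by (simp add: algebra_simps)
  moreover have "(2 * pi) \<noteq> 0" by simp
  ultimately have "u - v = of_int n" using mult_left_cancel[of "2 * pi" "u - v" "of_int n"] by blast
  then show "\<exists>k::int. u = v + of_int k" by (intro exI[of _ n]) simp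
next
  assume "\<exists>k::int. u = v + of_int k"
  then obtain k :: int where k: "u = v + of_int k" by blast
  have "cis (2 * pi * u) = cis (2 * pi * v) * cis (2 * pi * of_int k)"
    by (simp add: k cis_mult algebra_simps)
  also have "cis (2 * pi * of_int k) = 1" by (rule cis_multiple_2pi) simp
  finally show "cis (2 * pi * u) = cis (2 * pi * v)" by simp
qed

lemma S1_cis: "z \<in> S1 \<Longrightarrow> \<exists>t. z = cis (2 * pi * t)"
proof -
  assume "z \<in> S1"
  then have n: "norm z = 1" by (simp add: S1_def)
  then have "z \<noteq> 0" by auto
  then have "cis (Arg z) = z" using n by (simp add: cis_Arg sgn_div_norm)
  then show ?thesis by (intro exI[of _ "Arg z / (2 * pi)"]) simp
qed

lemma cis_S1: "cis x \<in> S1" by (simp add: S1_def)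

lemma get_lift:
  assumes d: "diff2_plus g" and fx: "\<exists>z\<in>S1. g z = z"
  shows "\<exists>F. C2fun F \<and> (\<forall>t. F (t + 1) = F t + 1) \<and> (\<exists>t. F t = t) \<and> (\<forall>t. g (cis (2 * pi * t)) = cis (2 * pi * F t))"
proof -
  obtain F0 F' F'' :: "real \<Rightarrow> real" where
    l: "\<forall>t. g (cis (2 * pi * t)) = cis (2 * pi * F0 t)" and p: "\<forall>t. F0 (t + 1) = F0 t + 1"
    and d1: "\<forall>t. (F0 has_real_derivative F' t) (at t)" and d2: "\<forall>t. (F' has_real_derivative F'' t) (at t)"
    and c: "continuous_on UNIV F''" and pos: "\<forall>t. F' t > 0"
    using d unfolding diff2_plus_def by blast
  obtain z where z: "z \<in> S1" "g z = z" using fx by blast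
  obtain s where s: "z = cis (2 * pi * s)" using S1_cis[OF z(1)] by blast
  have "cis (2 * pi * F0 s) = cis (2 * pi * s)" using l z s by metis
  then obtain k :: int where k: "F0 s = s + of_int k" using cis2_eq by blast
  define F where "F t = F0 t - of_int k" for t
  have "C2fun F" unfolding C2fun_def F_def
    using d1 d2 c pos by (intro exI[of _ F'] exI[of _ F'']) (auto intro!: derivative_eq_intros)
  moreover have "\<forall>t. F (t + 1) = F t + 1" using p by (simp add: F_def)
  moreover have "F s = s" using k by (simp add: F_def)
  moreover have "g (cis (2 * pi * t)) = cis (2 * pi * F t)" for t
  proof -
    have "F0 t = F t + of_int k" by (simp add: F_def)
    then have "cis (2 * pi * F0 t) = cis (2 * pi * F t)" using cis2_eq by blast
    then show ?thesis using l by simp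
  qed
  ultimately show ?thesis by blast
qed

lemma lift_interior:
  assumes l: "\<And>t. g (cis (2 * pi * t)) = cis (2 * pi * F t)" and fs: "fully_supported g"
  shows "interior {t. F t = t} = {}"
proof (rule ccontr)
  assume "interior {t. F t = t} \<noteq> {}"
  then obtain t0 where "t0 \<in> interior {t. F t = t}" by blast
  then obtain \<delta> where \<delta>: "\<delta> > 0" "ball t0 \<delta> \<subseteq> {t. F t = t}" using mem_interior by blast
  define U where "U = (\<lambda>t. cis (2 * pi * t)) ` ball t0 \<delta>"
  have US1: "U \<subseteq> S1" unfolding U_def using cis_S1 by auto
  have cA: "continuous (at 1) Arg"
    by (rule continuous_at_Arg) (simp add: complex_nonpos_Reals_iff)
  have op: "openin (top_of_set S1) U"
    unfolding openin_euclidean_subtopology_iff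
  proof (intro conjI ballI US1)
    fix z assume "z \<in> U"
    then obtain t1 where t1: "t1 \<in> ball t0 \<delta>" "z = cis (2 * pi * t1)" unfolding U_def by blast
    define r where "r = \<delta> - dist t0 t1"
    have r: "r > 0" using t1 by (simp add: r_def)
    obtain e where e: "e > 0" "\<And>q. dist q 1 < e \<Longrightarrow> dist (Arg q) (Arg 1) < 2 * pi * r"
      using cA r unfolding continuous_at_eps_delta by (metis pi_gt_zero mult_pos_pos zero_less_numeral)
    show "\<exists>e>0. \<forall>w\<in>S1. dist w z < e \<longrightarrow> w \<in> U"
    proof (intro exI[of _ e] conjI ballI impI e(1))
      fix w assume w: "w \<in> S1" "dist w z < e"
      define q where "q = w / z"
      have nz: "norm z = 1" using t1 by simp
      have nw: "norm w = 1" using w by (simp add: S1_def)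
      have "dist q 1 = norm (w - z) / norm z" unfolding q_def dist_norm
        using nz by (metis diff_divide_distrib divide_self_if norm_divide norm_eq_zero zero_neq_one)
      then have "dist q 1 < e" using nz w by (simp add: dist_norm)
      then have A: "\<bar>Arg q\<bar> < 2 * pi * r" using e(2) by (simp add: dist_real_def)
      have nq: "norm q = 1" unfolding q_def using nz nw by (simp add: norm_divide)
      then have "q \<noteq> 0" by auto
      then have cq: "cis (Arg q) = q" using nq by (simp add: cis_Arg sgn_div_norm)
      define t2 where "t2 = t1 + Arg q / (2 * pi)"
      have "w = z * q" unfolding q_def using nz by auto
      also have "\<dots> = cis (2 * pi * t1) * cis (Arg q)" using t1 cq by simp
      also have "\<dots> = cis (2 * pi * t1 + Arg q)" by (rule cis_mult)
      also have "2 * pi * t1 + Arg q = 2 * pi * t2" by (simp add: t2_def algebra_simps)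
      finally have wt2: "w = cis (2 * pi * t2)" .
      have A1: "Arg q < r * (2 * pi)" "- Arg q < r * (2 * pi)" using A abs_less_iff[of "Arg q"] by (simp_all add: mult.commute)
      have pp: "0 < 2 * pi" using pi_gt_zero by simp
      have s1: "Arg q / (2 * pi) < r" "- (Arg q / (2 * pi)) < r"
        using A1 pos_divide_less_eq[OF pp, of "Arg q" r] pos_divide_less_eq[OF pp, of "- Arg q" r] by simp_all
      have s2: "t0 - t1 \<le> dist t0 t1" "t1 - t0 \<le> dist t0 t1" by (simp_all add: dist_real_def)
      have "\<bar>t0 - t2\<bar> < \<delta>" unfolding abs_less_iff t2_def using s1 s2 unfolding r_def by linarith
      then have "dist t0 t2 < \<delta>" by (simp add: dist_real_def)
      then show "w \<in> U" unfolding U_def using wt2 by auto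
    qed
  qed
  have Ufix: "U \<subseteq> fix_set g"
  proof
    fix z assume "z \<in> U"
    then obtain t where t: "t \<in> ball t0 \<delta>" "z = cis (2 * pi * t)" unfolding U_def by blast
    have "F t = t" using \<delta>(2) t(1) by auto
    then have "g z = z" using l t(2) by simp
    then show "z \<in> fix_set g" using US1 \<open>z \<in> U\<close> unfolding fix_set_def by auto
  qed
  have "U \<subseteq> (top_of_set S1) interior_of (fix_set g)" by (rule interior_of_maximal[OF Ufix op])
  moreover have "U \<noteq> {}" unfolding U_def using \<delta>(1) by auto
  ultimately show False using fs unfolding fully_supported_def by auto
qed

lemma int_half: "real_of_int k = real_of_int m + 1 / 2 \<Longrightarrow> False"
proof -
  assume "real_of_int k = real_of_int m + 1 / 2"
  then have "real_of_int (2 * k) = real_of_int (2 * m + 1)" by simp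
  then have "2 * k = 2 * m + 1" by (simp only: of_int_eq_iff)
  then show False by presburger
qed

lemma lift_comm:
  assumes F: "liftok F" and H: "liftok H"
    and lF: "\<And>t. g (cis (2 * pi * t)) = cis (2 * pi * F t)"
    and lH: "\<And>t. h (cis (2 * pi * t)) = cis (2 * pi * H t)"
    and c: "commute_on_S1 g h"
  shows "F (H t) = H (F t)"
proof -
  define D where "D t = F (H t) - H (F t)" for t
  have Dint: "\<exists>k::int. D t = of_int k" for t
  proof -
    have "g (h (cis (2 * pi * t))) = h (g (cis (2 * pi * t)))" using c cis_S1 unfolding commute_on_S1_def by blast
    then have "cis (2 * pi * F (H t)) = cis (2 * pi * H (F t))" using lF lH by simp
    then show ?thesis unfolding D_def using cis2_eq by fastforce
  qed
  have cF: "\<And>t. isCont F t" and cH: "\<And>t. isCont H t" using F H C2_cont unfolding liftok_def by auto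
  have cD: "continuous_on UNIV D" unfolding D_def
  proof (intro continuous_at_imp_continuous_on ballI)
    fix x :: real
    show "isCont (\<lambda>t. F (H t) - H (F t)) x"
      using isCont_o2[OF cH cF] isCont_o2[OF cF cH] by (intro isCont_diff) auto
  qed
  have conn: "connected (range D)" using connected_continuous_image[OF cD] by simp
  obtain t0 where t0: "F t0 = t0" using F unfolding liftok_def by auto
  obtain k0 :: int where k0: "D t0 = of_int k0" using Dint by blast
  have const: "D t = of_int k0" for t
  proof -
    obtain k :: int where k: "D t = of_int k" using Dint by blast
    show ?thesis
    proof (cases k k0 rule: linorder_cases)
      case less
      then have "real_of_int k + 1 \<le> real_of_int k0" by linarith
      then have "of_int k0 - 1 / 2 \<in> range D"
        using connectedD_interval[OF conn, of "D t" "D t0" "of_int k0 - 1 / 2"] k k0 rangeI[of D t] rangeI[of D t0] by simp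
      then obtain s where "D s = of_int k0 - 1 / 2" by auto
      moreover obtain m :: int where "D s = of_int m" using Dint by blast
      ultimately have "real_of_int (k0 - 1) + 1 / 2 = real_of_int m" by simp
      then show ?thesis using int_half by metis
    next
      case equal then show ?thesis using k by simp
    next
      case greater
      then have "real_of_int k0 + 1 \<le> real_of_int k" by linarith
      then have "of_int k0 + 1 / 2 \<in> range D"
        using connectedD_interval[OF conn, of "D t0" "D t" "of_int k0 + 1 / 2"] k k0 rangeI[of D t] rangeI[of D t0] by simp
      then obtain s where "D s = of_int k0 + 1 / 2" by auto
      moreover obtain m :: int where "D s = of_int m" using Dint by blast
      ultimately show ?thesis using int_half by metis
    qed
  qed
  have p: "\<And>t. F (t + 1) = F t + 1" using F unfolding liftok_def by auto
  have smF: "strict_mono F" using liftok_bij[OF F] by auto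
  define x where "x = H t0"
  have Fx: "F x = x + of_int k0" using const[of t0] t0 unfolding D_def x_def by simp
  define j where "j = floor (x - t0)"
  have j: "t0 + of_int j \<le> x" "x < t0 + of_int (j + 1)" unfolding j_def by linarith+
  have fj: "F (t0 + of_int i) = t0 + of_int i" for i using shift_int[of F, OF p] t0 by simp
  have "k0 = 0"
  proof (rule ccontr)
    assume "k0 \<noteq> 0"
    then consider "k0 \<ge> 1" | "k0 \<le> -1" by linarith
    then show False
    proof cases
      case 1
      have "F x < F (t0 + of_int (j + 1))" using j smF by (simp add: strict_mono_less)
      then show False using fj[of "j+1"] Fx j 1 by simp
    next
      case 2
      have "F (t0 + of_int j) \<le> F x" using j smF by (simp add: strict_mono_less_eq)
      then show False using fj[of j] Fx j 2 by simp
    qed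
  qed
  then show ?thesis using const[of t] unfolding D_def by simp
qed

lemma lifts_comm_S1:
  assumes lF: "\<And>t. g (cis (2 * pi * t)) = cis (2 * pi * F t)"
    and lH: "\<And>t. h (cis (2 * pi * t)) = cis (2 * pi * H t)"
    and c: "\<And>t. F (H t) = H (F t)"
  shows "commute_on_S1 g h"
  unfolding commute_on_S1_def
proof
  fix z assume "z \<in> S1"
  then obtain t where t: "z = cis (2 * pi * t)" using S1_cis by blast
  show "g (h z) = h (g z)" using lF lH c t by simp
qed

lemma bij_S1:
  assumes F: "liftok F" and lF: "\<And>t. g (cis (2 * pi * t)) = cis (2 * pi * F t)"
  shows "bij_betw g S1 S1"
  unfolding bij_betw_def
proof (intro conjI)
  have p: "\<And>t. F (t + 1) = F t + 1" using F unfolding liftok_def by auto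
  have bF: "bij F" using liftok_bij[OF F] by auto
  show "inj_on g S1"
  proof (rule inj_onI)
    fix z1 z2 assume z: "z1 \<in> S1" "z2 \<in> S1" "g z1 = g z2"
    obtain t1 where t1: "z1 = cis (2 * pi * t1)" using S1_cis z(1) by blast
    obtain t2 where t2: "z2 = cis (2 * pi * t2)" using S1_cis z(2) by blast
    have "cis (2 * pi * F t1) = cis (2 * pi * F t2)" using z(3) t1 t2 lF by simp
    then obtain k :: int where k: "F t1 = F t2 + of_int k" using cis2_eq by blast
    then have "F t1 = F (t2 + of_int k)" using shift_int[of F, OF p] by simp
    then have "t1 = t2 + of_int k" using bF by (simp add: bij_def inj_eq)
    then show "z1 = z2" using t1 t2 cis2_eq by blast
  qed
  show "g ` S1 = S1"
  proof
    show "g ` S1 \<subseteq> S1"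
    proof
      fix w assume "w \<in> g ` S1"
      then obtain z where z: "z \<in> S1" "w = g z" by blast
      obtain t where "z = cis (2 * pi * t)" using S1_cis z(1) by blast
      then show "w \<in> S1" using z lF cis_S1 by simp
    qed
    show "S1 \<subseteq> g ` S1"
    proof
      fix w assume "w \<in> S1"
      then obtain s where s: "w = cis (2 * pi * s)" using S1_cis by blast
      obtain t where "F t = s" using bF by (metis bij_pointE)
      then have "w = g (cis (2 * pi * t))" using s lF by simp
      then show "w \<in> g ` S1" using cis_S1 by blast
    qed
  qed
qed

theorem corollary3p6:
  fixes gs :: "(complex \<Rightarrow> complex) set"
  assumes "finite gs"
    and "\<And>g. g \<in> gs \<Longrightarrow> diff2_plus g"
    and "\<And>g. g \<in> gs \<Longrightarrow> fully_supported g"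
    and "\<And>g. g \<in> gs \<Longrightarrow> (\<exists>z \<in> S1. g z = z)"
    and "comm_graph_connected gs"
  shows "\<forall>a \<in> generate (BijGroup S1) ((\<lambda>g. restrict g S1) ` gs).
         \<forall>b \<in> generate (BijGroup S1) ((\<lambda>g. restrict g S1) ` gs).
           a \<otimes>\<^bsub>BijGroup S1\<^esub> b = b \<otimes>\<^bsub>BijGroup S1\<^esub> a"
proof -
  have ex: "\<forall>g\<in>gs. \<exists>F. liftok F \<and> (\<forall>t. g (cis (2 * pi * t)) = cis (2 * pi * F t))"
  proof
    fix g assume g: "g \<in> gs"
    obtain F where F: "C2fun F" "\<forall>t. F (t + 1) = F t + 1" "\<exists>t. F t = t"
      "\<forall>t. g (cis (2 * pi * t)) = cis (2 * pi * F t)"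
      using get_lift[OF assms(2)[OF g] assms(4)[OF g]] by blast
    have "interior {t. F t = t} = {}" using lift_interior[OF _ assms(3)[OF g]] F(4) by blast
    then show "\<exists>F. liftok F \<and> (\<forall>t. g (cis (2 * pi * t)) = cis (2 * pi * F t))"
      using F unfolding liftok_def by blast
  qed
  then obtain L where L: "\<And>g. g \<in> gs \<Longrightarrow> liftok (L g)"
    "\<And>g t. g \<in> gs \<Longrightarrow> g (cis (2 * pi * t)) = cis (2 * pi * L g t)"
    by metis
  let ?E = "{(x, y). x \<in> gs \<and> y \<in> gs \<and> commute_on_S1 x y}"
  have path: "(g, h) \<in> ?E\<^sup>* \<Longrightarrow> g \<in> gs \<Longrightarrow> h \<in> gs \<and> (\<forall>t. L g (L h t) = L h (L g t))" for g h
  proof (induction rule: rtrancl_induct)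
    case base then show ?case by simp
  next
    case (step y z)
    then have y: "y \<in> gs" and z: "z \<in> gs" and cyz: "commute_on_S1 y z"
      and IH: "\<And>t. L g (L y t) = L y (L g t)" by auto
    have yz: "L y (L z t) = L z (L y t)" for t
      by (rule lift_comm[OF L(1)[OF y] L(1)[OF z] L(2)[OF y] L(2)[OF z] cyz])
    have "L g (L z t) = L z (L g t)" for t
      by (rule lift_trans[OF L(1)[OF step.prems] L(1)[OF z] L(1)[OF y] IH]) (use yz in simp)
    then show ?case using z by blast
  qed
  have commS1: "commute_on_S1 g h" if g: "g \<in> gs" and h: "h \<in> gs" for g h
  proof -
    have "(g, h) \<in> ?E\<^sup>*" using assms(5) g h unfolding comm_graph_connected_def by blast
    then have "\<forall>t. L g (L h t) = L h (L g t)" using path g by blast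
    then show ?thesis using lifts_comm_S1[of g "L g" h "L h", OF L(2)[OF g] L(2)[OF h]] by blast
  qed
  have bij: "bij_betw g S1 S1" if "g \<in> gs" for g using bij_S1[of "L g" g, OF L(1)[OF that] L(2)[OF that]] by blast
  let ?H = "(\<lambda>g. restrict g S1) ` gs"
  have Hc: "?H \<subseteq> carrier (BijGroup S1)"
    using bij by (auto simp: BijGroup_def Bij_def)
  have mult: "restrict g S1 \<otimes>\<^bsub>BijGroup S1\<^esub> restrict h S1 = (\<lambda>z\<in>S1. g (h z))"
    if g: "g \<in> gs" and h: "h \<in> gs" for g h
  proof -
    have "restrict g S1 \<in> Bij S1" "restrict h S1 \<in> Bij S1" using Hc g h by (auto simp: BijGroup_def)
    then have "restrict g S1 \<otimes>\<^bsub>BijGroup S1\<^esub> restrict h S1 = compose S1 (restrict g S1) (restrict h S1)"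
      by (simp add: BijGroup_def)
    also have "\<dots> = (\<lambda>z\<in>S1. g (h z))"
      using bij_betw_imp_funcset[OF bij[OF h]] by (auto simp: compose_def fun_eq_iff)
    finally show ?thesis .
  qed
  have Hcomm: "x \<otimes>\<^bsub>BijGroup S1\<^esub> y = y \<otimes>\<^bsub>BijGroup S1\<^esub> x" if xy: "x \<in> ?H" "y \<in> ?H" for x y
  proof -
    obtain g h where g: "g \<in> gs" "x = restrict g S1" and h: "h \<in> gs" "y = restrict h S1"
      using xy by blast
    have "(\<lambda>z\<in>S1. g (h z)) = (\<lambda>z\<in>S1. h (g z))"
      using commS1[OF g(1) h(1)] unfolding commute_on_S1_def by (auto simp: fun_eq_iff)
    then show ?thesis using mult[OF g(1) h(1)] mult[OF h(1) g(1)] g h by simp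
  qed
  show ?thesis
    by (rule group.generate_commuting[OF group_BijGroup Hc]) (use Hcomm in blast)
qed

end
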